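(* Let $K$ be a field and let $I$ be a monomial ideal in $R=K[x_1,\ldots,x_n]$ such that $I=I_1R+I_2R$, where $\mathcal{G}(I_1)\subset R_1=K[x_1,\ldots,x_m]$ and $\mathcal{G}(I_2)\subset R_2=K[x_{m+1},\ldots,x_n]$ for some $m\ge 1$. If $I_1$ (in $R_1$) and $I_2$ (in $R_2$) have the copersistence property, then $I$ has the copersistence property.
   Context: $\mathcal{G}(J)$ denotes the minimal set of monomial generators of a monomial ideal $J$. An ideal $I$ in a commutative Noetherian ring $R$ has the copersistence property if $\mathrm{Ass}_R(R/I^k)\supseteq\mathrm{Ass}_R(R/I^{k+1})$ for all $k\ge 1$. *)

theory Defs
  imports Main "HOL-Library.Poly_Mapping"
begin

text \<open>Polynomials in variables x_i (i :: nat) with coefficients in 'k: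
  maps from exponent vectors (monomials) to coefficients.\<close>
type_synonym 'k mpoly = "(nat \<Rightarrow>\<^sub>0 nat) \<Rightarrow>\<^sub>0 'k"

text \<open>The polynomial ring K[x_i : i in V], as a subring of the big polynomial type.\<close>
definition polys :: "nat set \<Rightarrow> 'k::comm_ring_1 mpoly set" where
  "polys V = {p :: 'k mpoly. \<forall>t\<in>Poly_Mapping.keys p. Poly_Mapping.keys (t :: nat \<Rightarrow>\<^sub>0 nat) \<subseteq> V}"

definition monom :: "(nat \<Rightarrow>\<^sub>0 nat) \<Rightarrow> 'k::comm_ring_1 mpoly" where
  "monom t = Poly_Mapping.single t 1"

definition is_ideal :: "'a::comm_ring_1 set \<Rightarrow> 'a set \<Rightarrow> bool" where
  "is_ideal S J \<longleftrightarrow> J \<subseteq> S \<and> 0 \<in> J \<and> (\<forall>a\<in>J. \<forall>b\<in>J. a + b \<in> J)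
     \<and> (\<forall>s\<in>S. \<forall>a\<in>J. s * a \<in> J)"

text \<open>Ideal of the ring S generated by G (for G a subset of S: the extension G S).\<close>
definition ideal_gen :: "'a::comm_ring_1 set \<Rightarrow> 'a set \<Rightarrow> 'a set" where
  "ideal_gen S G = \<Inter>{J. is_ideal S J \<and> G \<subseteq> J}"

fun ideal_pow :: "'a::comm_ring_1 set \<Rightarrow> 'a set \<Rightarrow> nat \<Rightarrow> 'a set" where
  "ideal_pow S J 0 = S"
| "ideal_pow S J (Suc k) = ideal_gen S {a * b | a b. a \<in> ideal_pow S J k \<and> b \<in> J}"

definition prime_ideal :: "'a::comm_ring_1 set \<Rightarrow> 'a set \<Rightarrow> bool" where
  "prime_ideal S P \<longleftrightarrow> is_ideal S P \<and> P \<noteq> S \<and>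
     (\<forall>a\<in>S. \<forall>b\<in>S. a * b \<in> P \<longrightarrow> a \<in> P \<or> b \<in> P)"

text \<open>Ass_S(S/J): primes of S of the form (J :_S f) for some f in S.\<close>
definition Ass :: "'a::comm_ring_1 set \<Rightarrow> 'a set \<Rightarrow> 'a set set" where
  "Ass S J = {P. prime_ideal S P \<and> (\<exists>f\<in>S. P = {a\<in>S. a * f \<in> J})}"

definition copersistent :: "'a::comm_ring_1 set \<Rightarrow> 'a set \<Rightarrow> bool" where
  "copersistent S J \<longleftrightarrow> (\<forall>k\<ge>1. Ass S (ideal_pow S J (Suc k)) \<subseteq> Ass S (ideal_pow S J k))"

definition monomial_ideal :: "nat set \<Rightarrow> 'k::comm_ring_1 mpoly set \<Rightarrow> bool" where
  "monomial_ideal V J \<longleftrightarrow> (\<exists>M. M \<subseteq> {t. Poly_Mapping.keys t \<subseteq> V} \<and> J = ideal_gen (polys V) (monom ` M))"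

end

theory Submission
  imports Defs
begin

lemma expand_pm: "(p::'a \<Rightarrow>\<^sub>0 'b::comm_monoid_add) = (\<Sum>t\<in>Poly_Mapping.keys p. Poly_Mapping.single t (Poly_Mapping.lookup p t))"
proof (rule poly_mapping_eqI)
  fix k
  show "Poly_Mapping.lookup p k = Poly_Mapping.lookup (\<Sum>t\<in>Poly_Mapping.keys p. Poly_Mapping.single t (Poly_Mapping.lookup p t)) k"
    by (simp add: lookup_sum lookup_single when_def in_keys_iff)
qed

lemma lookup_monom_mult_shift:
  "Poly_Mapping.lookup (monom s * (g::'k::comm_ring_1 mpoly)) (s + t) = Poly_Mapping.lookup g t"
  by (simp add: monom_def lookup_mult lookup_single when_mult mult_when)

lemma lookup_monom_mult_other:
  assumes "\<forall>t. k \<noteq> s + t"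
  shows "Poly_Mapping.lookup (monom s * (g::'k::comm_ring_1 mpoly)) k = 0"
  using assms by (simp add: monom_def lookup_mult lookup_single when_mult mult_when)

lemma keys_monom_mult: "Poly_Mapping.keys (monom s * (g::'k::comm_ring_1 mpoly)) = (\<lambda>t. s + t) ` Poly_Mapping.keys g"
proof safe
  fix k assume k: "k \<in> Poly_Mapping.keys (monom s * g)"
  show "k \<in> (\<lambda>t. s + t) ` Poly_Mapping.keys g"
  proof (cases "\<exists>t. k = s + t")
    case True
    then obtain t where t: "k = s + t" by blast
    with k have "t \<in> Poly_Mapping.keys g" by (simp add: in_keys_iff lookup_monom_mult_shift)
    with t show ?thesis by blast
  next
    case False
    with k show ?thesis by (simp add: in_keys_iff lookup_monom_mult_other)
  qed
next
  fix t assume "t \<in> Poly_Mapping.keys g"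
  then show "s + t \<in> Poly_Mapping.keys (monom s * g)" by (simp add: in_keys_iff lookup_monom_mult_shift)
qed

lemma keys_monom [simp]: "Poly_Mapping.keys (monom t :: 'k::comm_ring_1 mpoly) = {t}"
  by (simp add: monom_def)

lemma monom_mult: "(monom s :: 'k::comm_ring_1 mpoly) * monom t = monom (s + t)"
  by (simp add: monom_def mult_single)

lemma monom_zero: "(monom 0 :: 'k::comm_ring_1 mpoly) = 1"
  by (simp add: monom_def)

lemma single_monom: "Poly_Mapping.single 0 c * monom t = (Poly_Mapping.single t c :: 'k::comm_ring_1 mpoly)"
  by (simp add: monom_def mult_single)

definition vexp :: "nat set \<Rightarrow> (nat \<Rightarrow>\<^sub>0 nat) set" where
  "vexp V = {t. Poly_Mapping.keys t \<subseteq> V}"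

definition mideal :: "(nat \<Rightarrow>\<^sub>0 nat) set \<Rightarrow> 'k::comm_ring_1 mpoly set" where
  "mideal F = {p. Poly_Mapping.keys p \<subseteq> F}"

definition upc :: "nat set \<Rightarrow> (nat \<Rightarrow>\<^sub>0 nat) set \<Rightarrow> bool" where
  "upc V F \<longleftrightarrow> F \<subseteq> vexp V \<and> (\<forall>t\<in>F. \<forall>r\<in>vexp V. t + r \<in> F)"

definition meets :: "nat set \<Rightarrow> (nat \<Rightarrow>\<^sub>0 nat) set" where
  "meets A = {t. \<exists>i\<in>A. 0 < Poly_Mapping.lookup t i}"

lemma vexp_add: "s \<in> vexp V \<Longrightarrow> t \<in> vexp V \<Longrightarrow> s + t \<in> vexp V"
  using keys_add[of s t] by (auto simp: vexp_def)

lemma vexp_zero [simp]: "0 \<in> vexp V"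
  by (simp add: vexp_def)

lemma polys_mideal: "polys V = mideal (vexp V)"
  by (auto simp: polys_def mideal_def vexp_def)

lemma mideal_add: "p \<in> mideal F \<Longrightarrow> q \<in> mideal F \<Longrightarrow> p + q \<in> mideal F"
  using keys_add[of p q] by (auto simp: mideal_def)

lemma mideal_zero [simp]: "0 \<in> mideal F"
  by (simp add: mideal_def)

lemma mideal_uminus: "p \<in> mideal F \<Longrightarrow> - p \<in> mideal F"
  unfolding mideal_def by (simp add: keys_minus)

lemma mideal_diff: "p \<in> mideal F \<Longrightarrow> q \<in> mideal F \<Longrightarrow> p - q \<in> mideal F"
  using mideal_add[of p F "-q"] mideal_uminus[of q F] by simp

lemma mideal_mono: "F \<subseteq> G \<Longrightarrow> mideal F \<subseteq> mideal G"
  unfolding mideal_def by blast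

lemma monom_in_mideal: "(monom t :: 'k::comm_ring_1 mpoly) \<in> mideal F \<longleftrightarrow> t \<in> F"
  by (simp add: mideal_def)

lemma mideal_mult:
  assumes "upc V F" "p \<in> polys V" "q \<in> mideal F"
  shows "p * q \<in> mideal F"
proof -
  have "Poly_Mapping.keys (p * q) \<subseteq> {a + b | a b. a \<in> Poly_Mapping.keys p \<and> b \<in> Poly_Mapping.keys q}"
    by (rule keys_mult)
  also have "\<dots> \<subseteq> F"
  proof clarify
    fix a b assume "a \<in> Poly_Mapping.keys p" "b \<in> Poly_Mapping.keys q"
    then have "a \<in> vexp V" "b \<in> F" using assms by (auto simp: polys_mideal mideal_def)
    then show "a + b \<in> F" using assms(1) unfolding upc_def by (metis add.commute)
  qed
  finally show ?thesis by (simp add: mideal_def)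
qed

lemma upc_vexp: "upc V (vexp V)"
  unfolding upc_def by (metis order_refl vexp_add)

lemma polys_mult: "p \<in> polys V \<Longrightarrow> q \<in> polys V \<Longrightarrow> p * q \<in> polys V"
  unfolding polys_mideal by (rule mideal_mult[OF upc_vexp]) (simp add: polys_mideal)

lemma polys_add: "p \<in> polys V \<Longrightarrow> q \<in> polys V \<Longrightarrow> p + q \<in> polys V"
  unfolding polys_mideal by (rule mideal_add)

lemma polys_diff: "p \<in> polys V \<Longrightarrow> q \<in> polys V \<Longrightarrow> p - q \<in> polys V"
  unfolding polys_mideal by (rule mideal_diff)

lemma monom_polys: "t \<in> vexp V \<Longrightarrow> monom t \<in> polys V"
  unfolding polys_mideal monom_in_mideal .

lemma one_polys [simp]: "1 \<in> polys V"
proof -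
  have "monom 0 \<in> polys V" by (rule monom_polys) simp
  then show ?thesis by (simp only: monom_zero)
qed

lemma const_polys [simp]: "Poly_Mapping.single 0 c \<in> polys V"
  unfolding polys_def by simp

lemma is_ideal_mideal: 
  assumes u: "upc V F" shows "is_ideal (polys V) (mideal F)"
proof -
  have "mideal F \<subseteq> polys V" using u unfolding polys_mideal upc_def by (rule_tac mideal_mono) blast
  then show ?thesis unfolding is_ideal_def using mideal_add mideal_mult[OF u] mideal_zero by blast
qed

lemma ideal_sum:
  assumes "is_ideal S J" "finite X" "\<forall>x\<in>X. f x \<in> J"
  shows "sum f X \<in> J"
  using assms(2,3)
proof (induction X rule: finite_induct)
  case empty then show ?case using assms(1) by (simp add: is_ideal_def)
next
  case (insert x X) then show ?case using assms(1) by (simp add: is_ideal_def)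
qed

lemma ideal_multI: "is_ideal S J \<Longrightarrow> s \<in> S \<Longrightarrow> a \<in> J \<Longrightarrow> s * a \<in> J"
  by (simp add: is_ideal_def)

lemma ideal_addI: "is_ideal S J \<Longrightarrow> a \<in> J \<Longrightarrow> b \<in> J \<Longrightarrow> a + b \<in> J"
  by (simp add: is_ideal_def)

lemma mideal_sub_ideal:
  assumes J: "is_ideal (polys V) J" and F: "F \<subseteq> vexp V" and mon: "\<forall>t\<in>F. monom t \<in> J"
  shows "mideal F \<subseteq> J"
proof
  fix p :: "'a mpoly" assume p: "p \<in> mideal F"
  have "p = (\<Sum>t\<in>Poly_Mapping.keys p. Poly_Mapping.single t (Poly_Mapping.lookup p t))"
    by (rule expand_pm)
  also have "\<dots> \<in> J"
  proof (rule ideal_sum[OF J finite_keys], rule ballI)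
    fix t assume "t \<in> Poly_Mapping.keys p"
    then have "t \<in> F" using p by (auto simp: mideal_def)
    then have "Poly_Mapping.single 0 (Poly_Mapping.lookup p t) * monom t \<in> J"
      using mon J by (intro ideal_multI) auto
    then show "Poly_Mapping.single t (Poly_Mapping.lookup p t) \<in> J" by (simp add: single_monom)
  qed
  finally show "p \<in> J" .
qed

lemma ideal_gen_eqI:
  assumes "is_ideal S J0" "G \<subseteq> J0" "\<And>J. is_ideal S J \<Longrightarrow> G \<subseteq> J \<Longrightarrow> J0 \<subseteq> J"
  shows "ideal_gen S G = J0"
  using assms unfolding ideal_gen_def by blast

definition up :: "nat set \<Rightarrow> (nat \<Rightarrow>\<^sub>0 nat) set \<Rightarrow> (nat \<Rightarrow>\<^sub>0 nat) set" where
  "up V M = {s + r | s r. s \<in> M \<and> r \<in> vexp V}"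

lemma upc_up:
  assumes "M \<subseteq> vexp V" shows "upc V (up V M)"
  unfolding upc_def
proof (intro conjI ballI subsetI)
  fix t assume "t \<in> up V M"
  then obtain s r where "t = s + r" "s \<in> M" "r \<in> vexp V" unfolding up_def by blast
  then show "t \<in> vexp V" using assms vexp_add by blast
next
  fix t r' assume "t \<in> up V M" "r' \<in> vexp V"
  then obtain s r where t: "t = s + r" "s \<in> M" "r \<in> vexp V" unfolding up_def by blast
  then have "t + r' = s + (r + r')" by (simp add: add.assoc)
  moreover have "r + r' \<in> vexp V" using t(3) \<open>r' \<in> vexp V\<close> by (rule vexp_add)
  ultimately show "t + r' \<in> up V M" using t(2) unfolding up_def by blast
qed

lemma mono_gen:
  assumes M: "M \<subseteq> vexp V"
  shows "ideal_gen (polys V) (monom ` M :: 'k::comm_ring_1 mpoly set) = mideal (up V M)"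
proof (rule ideal_gen_eqI)
  show "is_ideal (polys V) (mideal (up V M) :: 'k mpoly set)" by (rule is_ideal_mideal[OF upc_up[OF M]])
  show "monom ` M \<subseteq> (mideal (up V M) :: 'k mpoly set)"
  proof
    fix p :: "'k mpoly" assume "p \<in> monom ` M"
    then obtain s where "p = monom s" "s \<in> M" by blast
    moreover have "s + 0 \<in> up V M" unfolding up_def using \<open>s \<in> M\<close> vexp_zero by blast
    ultimately show "p \<in> mideal (up V M)" by (simp add: monom_in_mideal)
  qed
  fix J :: "'k mpoly set" assume J: "is_ideal (polys V) J" "monom ` M \<subseteq> J"
  show "mideal (up V M) \<subseteq> J"
  proof (rule mideal_sub_ideal[OF J(1)])
    show "up V M \<subseteq> vexp V" using upc_up[OF M] unfolding upc_def by blast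
    show "\<forall>t\<in>up V M. monom t \<in> J"
    proof
      fix t assume "t \<in> up V M"
      then obtain s r where t: "t = s + r" "s \<in> M" "r \<in> vexp V" unfolding up_def by blast
      have "monom s \<in> J" using J(2) t(2) by blast
      then have "monom r * monom s \<in> J" using monom_polys[OF t(3)] by (rule ideal_multI[OF J(1), rotated])
      then show "monom t \<in> J" by (simp add: monom_mult t add.commute)
    qed
  qed
qed

fun powE :: "nat set \<Rightarrow> (nat \<Rightarrow>\<^sub>0 nat) set \<Rightarrow> nat \<Rightarrow> (nat \<Rightarrow>\<^sub>0 nat) set" where
  "powE V F 0 = vexp V"
| "powE V F (Suc k) = {a + b | a b. a \<in> powE V F k \<and> b \<in> F}"

lemma upc_powE:
  assumes F: "upc V F" shows "upc V (powE V F k)"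
proof (induction k)
  case 0 then show ?case by (simp add: upc_vexp)
next
  case (Suc k)
  show ?case unfolding upc_def
  proof (intro conjI ballI subsetI)
    fix t assume "t \<in> powE V F (Suc k)"
    then obtain a b where "t = a + b" "a \<in> powE V F k" "b \<in> F" by auto
    then show "t \<in> vexp V" using Suc F unfolding upc_def by (metis subsetD vexp_add)
  next
    fix t r assume "t \<in> powE V F (Suc k)" "r \<in> vexp V"
    then obtain a b where t: "t = a + b" "a \<in> powE V F k" "b \<in> F" by auto
    then have "a + r \<in> powE V F k" using Suc \<open>r \<in> vexp V\<close> unfolding upc_def by blast
    moreover have "t + r = (a + r) + b" using t by (simp add: ac_simps)
    ultimately show "t + r \<in> powE V F (Suc k)" using t(3) by auto
  qed
qed

lemma powE_vexp: "upc V F \<Longrightarrow> powE V F k \<subseteq> vexp V"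
  using upc_powE unfolding upc_def by blast

lemma powE_up: "upc V F \<Longrightarrow> t \<in> powE V F k \<Longrightarrow> r \<in> vexp V \<Longrightarrow> t + r \<in> powE V F k"
  using upc_powE unfolding upc_def by blast

lemma powE_Suc_sub:
  assumes F: "upc V F" shows "powE V F (Suc k) \<subseteq> powE V F k"
proof
  fix t assume "t \<in> powE V F (Suc k)"
  then obtain a b where t: "t = a + b" "a \<in> powE V F k" "b \<in> F" by auto
  then have "b \<in> vexp V" using F unfolding upc_def by blast
  then show "t \<in> powE V F k" using powE_up[OF F t(2)] t(1) by simp
qed

lemma powE_anti:
  assumes F: "upc V F" and "i \<le> j" shows "powE V F j \<subseteq> powE V F i"
  using assms(2)
proof (induction j)
  case 0 then show ?case by simp
next
  case (Suc j)
  show ?case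
  proof (cases "i = Suc j")
    case True then show ?thesis by simp
  next
    case False then have "i \<le> j" using Suc.prems by simp
    then show ?thesis using Suc.IH powE_Suc_sub[OF F, of j] by blast
  qed
qed

lemma powE_step: "t \<in> powE V F k \<Longrightarrow> b \<in> F \<Longrightarrow> t + b \<in> powE V F (Suc k)"
  by auto

lemma powE_empty: "powE V {} (Suc k) = {}"
  by simp

lemma powE_nonempty:
  assumes "F \<noteq> {}" shows "powE V F k \<noteq> {}"
proof (induction k)
  case 0 then show ?case using vexp_zero[of V] by (metis empty_iff powE.simps(1))
next
  case (Suc k)
  then obtain a where "a \<in> powE V F k" by blast
  moreover obtain b where "b \<in> F" using assms by blast
  ultimately show ?case using powE_step by blast
qed

lemma ideal_pow_mideal:
  assumes F: "upc V F"
  shows "ideal_pow (polys V) (mideal F :: 'k::comm_ring_1 mpoly set) k = mideal (powE V F k)"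
proof (induction k)
  case 0 then show ?case by (simp add: polys_mideal)
next
  case (Suc k)
  let ?G = "{a * b | a b. a \<in> (mideal (powE V F k) :: 'k mpoly set) \<and> b \<in> mideal F}"
  have "ideal_gen (polys V) ?G = mideal (powE V F (Suc k))"
  proof (rule ideal_gen_eqI)
    show "is_ideal (polys V) (mideal (powE V F (Suc k)) :: 'k mpoly set)"
      by (rule is_ideal_mideal[OF upc_powE[OF F]])
    show "?G \<subseteq> mideal (powE V F (Suc k))"
    proof clarify
      fix a b :: "'k mpoly" assume ab: "a \<in> mideal (powE V F k)" "b \<in> mideal F"
      have "Poly_Mapping.keys (a * b) \<subseteq> {x + y | x y. x \<in> Poly_Mapping.keys a \<and> y \<in> Poly_Mapping.keys b}"
        by (rule keys_mult)
      also have "\<dots> \<subseteq> powE V F (Suc k)" using ab unfolding mideal_def by auto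
      finally show "a * b \<in> mideal (powE V F (Suc k))" unfolding mideal_def by blast
    qed
    fix J :: "'k mpoly set" assume J: "is_ideal (polys V) J" "?G \<subseteq> J"
    show "mideal (powE V F (Suc k)) \<subseteq> J"
    proof (rule mideal_sub_ideal[OF J(1) powE_vexp[OF F]], rule ballI)
      fix t assume "t \<in> powE V F (Suc k)"
      then obtain x y where t: "t = x + y" "x \<in> powE V F k" "y \<in> F" by auto
      have "monom x \<in> (mideal (powE V F k) :: 'k mpoly set)" "monom y \<in> (mideal F :: 'k mpoly set)"
        using t by (simp_all add: monom_in_mideal)
      then have "monom x * monom y \<in> ?G" by blast
      then show "monom t \<in> J" using J(2) t(1) by (auto simp: monom_mult)
    qed
  qed
  then show ?case using Suc.IH by simp
qed

lemma single_split:
  assumes "0 < Poly_Mapping.lookup b i"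
  shows "b = Poly_Mapping.single i 1 + (b - Poly_Mapping.single i (1::nat))"
proof (rule poly_mapping_eqI)
  fix k show "Poly_Mapping.lookup b k = Poly_Mapping.lookup (Poly_Mapping.single i 1 + (b - Poly_Mapping.single i 1)) k"
  proof (cases "k = i")
    case True then show ?thesis using assms by (simp add: lookup_add lookup_minus)
  next
    case False then show ?thesis by (simp add: lookup_add lookup_minus lookup_single_not_eq)
  qed
qed

lemma keys_minus_single: "Poly_Mapping.keys (b - Poly_Mapping.single i (1::nat)) \<subseteq> Poly_Mapping.keys b"
proof
  fix k assume "k \<in> Poly_Mapping.keys (b - Poly_Mapping.single i (1::nat))"
  then have "Poly_Mapping.lookup b k - Poly_Mapping.lookup (Poly_Mapping.single i 1) k \<noteq> 0"
    by (simp add: in_keys_iff lookup_minus)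
  then show "k \<in> Poly_Mapping.keys b" by (simp add: in_keys_iff)
qed

lemma vexp_minus_single: assumes "b \<in> vexp V" shows "b - Poly_Mapping.single i (1::nat) \<in> vexp V"
  using order_trans[OF keys_minus_single[of b i]] assms unfolding vexp_def by simp

lemma powE_drop:
  assumes F: "upc V F" and u: "u \<in> vexp V"
    and h: "Poly_Mapping.single i 1 + u \<in> powE V F (Suc q)"
  shows "u \<in> powE V F q"
  using u h
proof (induction q arbitrary: u)
  case 0 then show ?case by simp
next
  case (Suc q)
  let ?e = "Poly_Mapping.single i (1::nat)"
  obtain a b where ab: "?e + u = a + b" "a \<in> powE V F (Suc q)" "b \<in> F" using Suc.prems(2) by auto
  have bV: "b \<in> vexp V" using ab(3) F unfolding upc_def by blast
  have "Poly_Mapping.lookup (?e + u) i = Poly_Mapping.lookup a i + Poly_Mapping.lookup b i"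
    using ab(1) by (simp add: lookup_add)
  then have pos: "0 < Poly_Mapping.lookup a i + Poly_Mapping.lookup b i" by (simp add: lookup_add del: add_gr_0)
  show ?case
  proof (cases "0 < Poly_Mapping.lookup b i")
    case True
    have "?e + u = ?e + (a + (b - ?e))" using ab(1) single_split[OF True] by (metis add.left_commute)
    then have "u = a + (b - ?e)" by simp
    then show ?thesis using powE_Suc_sub[OF F] ab(2) powE_up[OF F _ vexp_minus_single[OF bV]] by blast
  next
    case False
    then have ai: "0 < Poly_Mapping.lookup a i" using pos by simp
    have aV: "a \<in> vexp V" using ab(2) powE_vexp[OF F] by blast
    have "?e + u = ?e + ((a - ?e) + b)" using ab(1) single_split[OF ai] by (metis add.assoc)
    then have u: "u = (a - ?e) + b" by simp
    have "?e + (a - ?e) \<in> powE V F (Suc q)" using ab(2) single_split[OF ai] by simp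
    then have "a - ?e \<in> powE V F q" using Suc.IH vexp_minus_single[OF aV] by blast
    then show ?thesis using u ab(3) by auto
  qed
qed

definition res :: "nat set \<Rightarrow> (nat \<Rightarrow>\<^sub>0 nat) \<Rightarrow> (nat \<Rightarrow>\<^sub>0 nat)" where
  "res X t = Poly_Mapping.mapp (\<lambda>i c. if i \<in> X then c else 0) t"

lemma lookup_res: "Poly_Mapping.lookup (res X t) i = (if i \<in> X then Poly_Mapping.lookup t i else 0)"
  by (auto simp: res_def lookup_mapp when_def in_keys_iff)

lemma res_add: "res X (a + b) = res X a + res X b"
  by (rule poly_mapping_eqI) (simp add: lookup_res lookup_add)

lemma res_vexp: "res X t \<in> vexp X"
  unfolding vexp_def by (auto simp: in_keys_iff lookup_res split: if_splits)

lemma res_id: "t \<in> vexp X \<Longrightarrow> res X t = t"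
  by (rule poly_mapping_eqI) (auto simp: lookup_res vexp_def in_keys_iff)

lemma res_zero: "t \<in> vexp Y \<Longrightarrow> X \<inter> Y = {} \<Longrightarrow> res X t = 0"
  by (rule poly_mapping_eqI) (auto simp: lookup_res vexp_def in_keys_iff)

lemma res_split: "t \<in> vexp (X \<union> Y) \<Longrightarrow> X \<inter> Y = {} \<Longrightarrow> t = res X t + res Y t"
  by (rule poly_mapping_eqI) (auto simp: lookup_res lookup_add vexp_def in_keys_iff)

lemma vexp_mono: "X \<subseteq> Y \<Longrightarrow> vexp X \<subseteq> vexp Y"
  unfolding vexp_def by blast

lemma sum_gen:
  assumes V1: "V1 \<subseteq> V" and V2: "V2 \<subseteq> V" and F1: "upc V1 F1" and F2: "upc V2 F2"
  shows "ideal_gen (polys V) (mideal F1 \<union> mideal F2 :: 'k::comm_ring_1 mpoly set) = mideal (up V (F1 \<union> F2))"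
proof -
  have F12: "F1 \<union> F2 \<subseteq> vexp V"
    using F1 F2 vexp_mono[OF V1] vexp_mono[OF V2] unfolding upc_def by blast
  have sub: "F1 \<union> F2 \<subseteq> up V (F1 \<union> F2)"
  proof
    fix t assume "t \<in> F1 \<union> F2"
    moreover have "t = t + 0" by simp
    ultimately show "t \<in> up V (F1 \<union> F2)" unfolding up_def using vexp_zero by blast
  qed
  show ?thesis
  proof (rule ideal_gen_eqI)
    show "is_ideal (polys V) (mideal (up V (F1 \<union> F2)) :: 'k mpoly set)"
      by (rule is_ideal_mideal[OF upc_up[OF F12]])
    show "mideal F1 \<union> mideal F2 \<subseteq> (mideal (up V (F1 \<union> F2)) :: 'k mpoly set)"
      using mideal_mono[of F1 "up V (F1 \<union> F2)"] mideal_mono[of F2 "up V (F1 \<union> F2)"] sub by blast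
    fix J :: "'k mpoly set" assume J: "is_ideal (polys V) J" "mideal F1 \<union> mideal F2 \<subseteq> J"
    show "mideal (up V (F1 \<union> F2)) \<subseteq> J"
    proof (rule mideal_sub_ideal[OF J(1)])
      show "up V (F1 \<union> F2) \<subseteq> vexp V" using upc_up[OF F12] unfolding upc_def by blast
      show "\<forall>t\<in>up V (F1 \<union> F2). monom t \<in> J"
      proof
        fix t assume "t \<in> up V (F1 \<union> F2)"
        then obtain s r where t: "t = s + r" "s \<in> F1 \<union> F2" "r \<in> vexp V" unfolding up_def by blast
        have "(monom s :: 'k mpoly) \<in> mideal F1 \<union> mideal F2" using t(2) by (auto simp: monom_in_mideal)
        then have "monom s \<in> J" using J(2) by blast
        then have "monom r * monom s \<in> J" using monom_polys[OF t(3)] by (rule ideal_multI[OF J(1), rotated])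
        then show "monom t \<in> J" by (simp add: monom_mult t add.commute)
      qed
    qed
  qed
qed

lemma powE_sum:
  assumes V: "V = V1 \<union> V2" and D: "V1 \<inter> V2 = {}" and F1: "upc V1 F1" and F2: "upc V2 F2"
  shows "t \<in> powE V (up V (F1 \<union> F2)) k \<longleftrightarrow> t \<in> vexp V \<and>
     (\<exists>i j. i + j = k \<and> res V1 t \<in> powE V1 F1 i \<and> res V2 t \<in> powE V2 F2 j)"
proof (induction k arbitrary: t)
  case 0
  show ?case by (auto simp: res_vexp)
next
  case (Suc k)
  let ?G = "up V (F1 \<union> F2)"
  have F12: "F1 \<union> F2 \<subseteq> vexp V"
    using F1 F2 vexp_mono[of V1 V] vexp_mono[of V2 V] V unfolding upc_def by blast
  have uG: "upc V ?G" by (rule upc_up[OF F12])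
  have D': "V2 \<inter> V1 = {}" using D by blast
  show ?case
  proof
    assume "t \<in> powE V ?G (Suc k)"
    then obtain a b where ab: "t = a + b" "a \<in> powE V ?G k" "b \<in> ?G" by auto
    from ab(3) obtain s r where b: "b = s + r" "s \<in> F1 \<union> F2" "r \<in> vexp V" unfolding up_def by blast
    from ab(2) Suc.IH obtain i j where ij: "i + j = k" "res V1 a \<in> powE V1 F1 i" "res V2 a \<in> powE V2 F2 j" "a \<in> vexp V"
      by blast
    have tV: "t \<in> vexp V" using powE_vexp[OF uG, of "Suc k"] \<open>t \<in> powE V ?G (Suc k)\<close> by blast
    have r1: "res V1 t = (res V1 a + res V1 s) + res V1 r" and r2: "res V2 t = (res V2 a + res V2 s) + res V2 r"
      using ab(1) b(1) by (simp_all add: res_add add.assoc)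
    show "t \<in> vexp V \<and> (\<exists>i j. i + j = Suc k \<and> res V1 t \<in> powE V1 F1 i \<and> res V2 t \<in> powE V2 F2 j)"
    proof (cases "s \<in> F1")
      case True
      then have sV: "s \<in> vexp V1" using F1 unfolding upc_def by blast
      have "res V1 a + res V1 s \<in> powE V1 F1 (Suc i)" using ij(2) True res_id[OF sV] by auto
      then have 1: "res V1 t \<in> powE V1 F1 (Suc i)" unfolding r1 by (rule powE_up[OF F1 _ res_vexp])
      have "res V2 a + res V2 s \<in> powE V2 F2 j" using ij(3) res_zero[OF sV D'] by simp
      then have 2: "res V2 t \<in> powE V2 F2 j" unfolding r2 by (rule powE_up[OF F2 _ res_vexp])
      show ?thesis using tV 1 2 ij(1) by (intro conjI exI[of _ "Suc i"] exI[of _ j]) auto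
    next
      case False
      then have s2: "s \<in> F2" using b(2) by blast
      then have sV: "s \<in> vexp V2" using F2 unfolding upc_def by blast
      have "res V2 a + res V2 s \<in> powE V2 F2 (Suc j)" using ij(3) s2 res_id[OF sV] by auto
      then have 2: "res V2 t \<in> powE V2 F2 (Suc j)" unfolding r2 by (rule powE_up[OF F2 _ res_vexp])
      have "res V1 a + res V1 s \<in> powE V1 F1 i" using ij(2) res_zero[OF sV D] by simp
      then have 1: "res V1 t \<in> powE V1 F1 i" unfolding r1 by (rule powE_up[OF F1 _ res_vexp])
      show ?thesis using tV 1 2 ij(1) by (intro conjI exI[of _ i] exI[of _ "Suc j"]) auto
    qed
  next
    assume "t \<in> vexp V \<and> (\<exists>i j. i + j = Suc k \<and> res V1 t \<in> powE V1 F1 i \<and> res V2 t \<in> powE V2 F2 j)"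
    then obtain i j where tV: "t \<in> vexp V" and ij: "i + j = Suc k" "res V1 t \<in> powE V1 F1 i" "res V2 t \<in> powE V2 F2 j"
      by blast
    have tsplit: "t = res V1 t + res V2 t" using res_split[of t V1 V2] tV V D by simp
    show "t \<in> powE V ?G (Suc k)"
    proof (cases i)
      case (Suc i')
      then obtain a1 b1 where ab: "res V1 t = a1 + b1" "a1 \<in> powE V1 F1 i'" "b1 \<in> F1" using ij(2) by auto
      have a1V: "a1 \<in> vexp V1" using ab(2) powE_vexp[OF F1] by blast
      define a where "a = a1 + res V2 t"
      have ra1: "res V1 a = a1" unfolding a_def res_add using res_id[OF a1V] res_zero[OF res_vexp D] by simp
      have ra2: "res V2 a = res V2 t" unfolding a_def res_add using res_id[OF res_vexp] res_zero[OF a1V D'] by simp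
      have aV: "a \<in> vexp V" unfolding a_def using vexp_mono[of V1 V] vexp_mono[of V2 V] V a1V res_vexp[of V2 t]
        by (intro vexp_add) auto
      have "a \<in> powE V ?G k" using Suc.IH[of a] aV ra1 ra2 ab(2) ij(3) ij(1) Suc by auto
      moreover have "b1 \<in> ?G"
      proof -
        have "b1 + 0 \<in> ?G" unfolding up_def using ab(3) vexp_zero by blast
        then show ?thesis by simp
      qed
      moreover have "t = a + b1" using tsplit ab(1) unfolding a_def by (simp add: ac_simps)
      ultimately show ?thesis using powE_step by blast
    next
      case 0
      then have jS: "j = Suc k" using ij(1) by simp
      then obtain a2 b2 where ab: "res V2 t = a2 + b2" "a2 \<in> powE V2 F2 k" "b2 \<in> F2" using ij(3) by auto
      have a2V: "a2 \<in> vexp V2" using ab(2) powE_vexp[OF F2] by blast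
      define a where "a = res V1 t + a2"
      have ra1: "res V1 a = res V1 t" unfolding a_def res_add using res_id[OF res_vexp] res_zero[OF a2V D] by simp
      have ra2: "res V2 a = a2" unfolding a_def res_add using res_id[OF a2V] res_zero[OF res_vexp D'] by simp
      have aV: "a \<in> vexp V" unfolding a_def using vexp_mono[of V1 V] vexp_mono[of V2 V] V a2V res_vexp[of V1 t]
        by (intro vexp_add) auto
      have "res V1 a \<in> powE V1 F1 0" using ij(2) 0 ra1 by simp
      moreover have "res V2 a \<in> powE V2 F2 k" using ab(2) ra2 by simp
      ultimately have "a \<in> powE V ?G k" using Suc.IH[of a] aV by (metis add_0)
      moreover have "b2 \<in> ?G"
      proof -
        have "b2 + 0 \<in> ?G" unfolding up_def using ab(3) vexp_zero by blast
        then show ?thesis by simp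
      qed
      moreover have "t = a + b2" using tsplit ab(1) unfolding a_def by (simp add: ac_simps)
      ultimately show ?thesis using powE_step by blast
    qed
  qed
qed

lemma meets_add: "s + t \<in> meets A \<longleftrightarrow> s \<in> meets A \<or> t \<in> meets A"
  unfolding meets_def by (auto simp: lookup_add)

lemma zero_meets [simp]: "0 \<notin> meets A"
  unfolding meets_def by simp

lemma single_meets: "i \<in> A \<Longrightarrow> Poly_Mapping.single i 1 \<in> meets A"
  unfolding meets_def by force

lemma single_vexp: "i \<in> V \<Longrightarrow> Poly_Mapping.single i (1::nat) \<in> vexp V"
  unfolding vexp_def by simp

lemma meets_res:
  assumes "A \<subseteq> V1 \<union> V2"
  shows "t \<in> meets A \<longleftrightarrow> res V1 t \<in> meets (A \<inter> V1) \<or> res V2 t \<in> meets (A \<inter> V2)"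
  using assms unfolding meets_def by (auto simp: lookup_res)

definition cc :: "nat set \<Rightarrow> (nat \<Rightarrow>\<^sub>0 nat) set \<Rightarrow> nat set \<Rightarrow> (nat \<Rightarrow>\<^sub>0 nat) \<Rightarrow> bool" where
  "cc V F A u \<longleftrightarrow> u \<in> vexp V \<and> (\<forall>w\<in>vexp V. w + u \<in> F \<longleftrightarrow> w \<in> meets A)"

definition cnd :: "nat set \<Rightarrow> (nat \<Rightarrow> (nat \<Rightarrow>\<^sub>0 nat) set) \<Rightarrow> nat set \<Rightarrow> (nat \<Rightarrow>\<^sub>0 nat) \<Rightarrow>
   nat set \<Rightarrow> (nat \<Rightarrow> (nat \<Rightarrow>\<^sub>0 nat) set) \<Rightarrow> nat set \<Rightarrow> (nat \<Rightarrow>\<^sub>0 nat) \<Rightarrow> nat \<Rightarrow> bool" where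
  "cnd V1 P1 A1 u1 V2 P2 A2 u2 k \<longleftrightarrow> (\<forall>w1\<in>vexp V1. \<forall>w2\<in>vexp V2.
     (\<exists>i j. i + j = k \<and> w1 + u1 \<in> P1 i \<and> w2 + u2 \<in> P2 j) \<longleftrightarrow> (w1 \<in> meets A1 \<or> w2 \<in> meets A2))"

lemma ex_swap: "(\<exists>i j. i + j = (k::nat) \<and> X i \<and> Y j) = (\<exists>i j. i + j = k \<and> Y i \<and> X j)"
  by (metis add.commute)

lemma cnd_swap: "cnd V1 P1 A1 u1 V2 P2 A2 u2 k = cnd V2 P2 A2 u2 V1 P1 A1 u1 k"
proof
  assume c: "cnd V1 P1 A1 u1 V2 P2 A2 u2 k"
  show "cnd V2 P2 A2 u2 V1 P1 A1 u1 k" unfolding cnd_def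
  proof (intro ballI)
    fix w2 w1 assume "w2 \<in> vexp V2" "w1 \<in> vexp V1"
    then have "(\<exists>i j. i + j = k \<and> w1 + u1 \<in> P1 i \<and> w2 + u2 \<in> P2 j) \<longleftrightarrow> (w1 \<in> meets A1 \<or> w2 \<in> meets A2)"
      using c unfolding cnd_def by blast
    then show "(\<exists>i j. i + j = k \<and> w2 + u2 \<in> P2 i \<and> w1 + u1 \<in> P1 j) \<longleftrightarrow> (w2 \<in> meets A2 \<or> w1 \<in> meets A1)"
      by (subst ex_swap) blast
  qed
next
  assume c: "cnd V2 P2 A2 u2 V1 P1 A1 u1 k"
  show "cnd V1 P1 A1 u1 V2 P2 A2 u2 k" unfolding cnd_def
  proof (intro ballI)
    fix w1 w2 assume "w1 \<in> vexp V1" "w2 \<in> vexp V2"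
    then have "(\<exists>i j. i + j = k \<and> w2 + u2 \<in> P2 i \<and> w1 + u1 \<in> P1 j) \<longleftrightarrow> (w2 \<in> meets A2 \<or> w1 \<in> meets A1)"
      using c unfolding cnd_def by blast
    then show "(\<exists>i j. i + j = k \<and> w1 + u1 \<in> P1 i \<and> w2 + u2 \<in> P2 j) \<longleftrightarrow> (w1 \<in> meets A1 \<or> w2 \<in> meets A2)"
      by (subst ex_swap) blast
  qed
qed

lemma cndD:
  assumes "cnd V1 P1 A1 u1 V2 P2 A2 u2 k" "w1 \<in> vexp V1" "w2 \<in> vexp V2"
  shows "(\<exists>i j. i + j = k \<and> w1 + u1 \<in> P1 i \<and> w2 + u2 \<in> P2 j) \<longleftrightarrow> (w1 \<in> meets A1 \<or> w2 \<in> meets A2)"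
  using assms unfolding cnd_def by blast

lemma powE_emptyF: "x \<in> powE V {} j \<Longrightarrow> j = 0"
  by (cases j) auto

lemma L0:
  assumes F1: "upc V1 F1" and F2: "upc V2 F2"
    and c: "cnd V1 (powE V1 F1) {} u1 V2 (powE V2 F2) {} u2 (Suc k)" and k: "1 \<le> k"
  shows "cnd V1 (powE V1 F1) {} u1 V2 (powE V2 F2) {} u2 k"
  unfolding cnd_def
proof (intro ballI)
  fix w1 w2 assume w1: "w1 \<in> vexp V1" and w2: "w2 \<in> vexp V2"
  have False if ij: "i + j = k" "w1 + u1 \<in> powE V1 F1 i" "w2 + u2 \<in> powE V2 F2 j" for i j
  proof (cases "F1 = {}")
    case False
    then obtain g where g: "g \<in> F1" by blast
    then have gV: "g \<in> vexp V1" using F1 unfolding upc_def by blast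
    have "(w1 + g) + u1 \<in> powE V1 F1 (Suc i)" using powE_step[OF ij(2) g] by (simp add: ac_simps)
    then have "\<exists>i j. i + j = Suc k \<and> (w1 + g) + u1 \<in> powE V1 F1 i \<and> w2 + u2 \<in> powE V2 F2 j"
      using ij by (intro exI[of _ "Suc i"] exI[of _ j]) auto
    then show False using cndD[OF c vexp_add[OF w1 gV] w2] by (simp add: meets_def)
  next
    case True
    then have i0: "i = 0" using powE_emptyF ij(2) by blast
    show False
    proof (cases "F2 = {}")
      case True
      then have "j = 0" using powE_emptyF ij(3) by blast
      then show False using i0 ij(1) k by simp
    next
      case False
      then obtain g where g: "g \<in> F2" by blast
      then have gV: "g \<in> vexp V2" using F2 unfolding upc_def by blast
      have "(w2 + g) + u2 \<in> powE V2 F2 (Suc j)" using powE_step[OF ij(3) g] by (simp add: ac_simps)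
      then have "\<exists>i' j'. i' + j' = Suc k \<and> w1 + u1 \<in> powE V1 F1 i' \<and> (w2 + g) + u2 \<in> powE V2 F2 j'"
        using ij by (intro exI[of _ i] exI[of _ "Suc j"]) auto
      then show False using cndD[OF c w1 vexp_add[OF w2 gV]] by (simp add: meets_def)
    qed
  qed
  then show "(\<exists>i j. i + j = k \<and> w1 + u1 \<in> powE V1 F1 i \<and> w2 + u2 \<in> powE V2 F2 j) \<longleftrightarrow>
         (w1 \<in> meets {} \<or> w2 \<in> meets {})" unfolding meets_def by blast
qed

lemma L1:
  assumes F1: "upc V1 F1" and F2: "upc V2 F2"
    and c: "cnd V1 (powE V1 F1) A1 u1 V2 (powE V2 F2) {} u2 (Suc k)" and k: "1 \<le> k"
    and H1: "\<forall>p\<ge>1. \<forall>u. cc V1 (powE V1 F1 (Suc p)) A1 u \<longrightarrow> (\<exists>u'. cc V1 (powE V1 F1 p) A1 u')"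
    and u1: "u1 \<in> vexp V1" and u2: "u2 \<in> vexp V2"
  shows "\<exists>u1'. u1' \<in> vexp V1 \<and> cnd V1 (powE V1 F1) A1 u1' V2 (powE V2 F2) {} u2 k"
proof -
  have nm: "x \<notin> meets {}" for x unfolding meets_def by blast
  have F2e: "F2 = {}"
  proof (rule ccontr)
    assume "F2 \<noteq> {}"
    then obtain w0 where w0: "w0 \<in> powE V2 F2 (Suc k)" using powE_nonempty by blast
    then have w0V: "w0 \<in> vexp V2" using powE_vexp[OF F2] by blast
    have "w0 + u2 \<in> powE V2 F2 (Suc k)" using powE_up[OF F2 w0 u2] .
    moreover have "0 + u1 \<in> powE V1 F1 0" using u1 by simp
    ultimately have "\<exists>i j. i + j = Suc k \<and> 0 + u1 \<in> powE V1 F1 i \<and> w0 + u2 \<in> powE V2 F2 j"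
      by (intro exI[of _ 0] exI[of _ "Suc k"]) simp
    then show False using cndD[OF c vexp_zero w0V] nm by simp
  qed
  have red: "(\<exists>i j. i + j = n \<and> w1 + u \<in> powE V1 F1 i \<and> w2 + u2 \<in> powE V2 F2 j) \<longleftrightarrow> w1 + u \<in> powE V1 F1 n"
    if "w2 \<in> vexp V2" for n w1 u w2
  proof
    assume "\<exists>i j. i + j = n \<and> w1 + u \<in> powE V1 F1 i \<and> w2 + u2 \<in> powE V2 F2 j"
    then obtain i j where "i + j = n" "w1 + u \<in> powE V1 F1 i" "w2 + u2 \<in> powE V2 F2 j" by blast
    moreover then have "j = 0" using F2e powE_emptyF by blast
    ultimately show "w1 + u \<in> powE V1 F1 n" by simp
  next
    assume "w1 + u \<in> powE V1 F1 n"
    moreover have "w2 + u2 \<in> powE V2 F2 0" using vexp_add[OF that u2] by simp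
    ultimately show "\<exists>i j. i + j = n \<and> w1 + u \<in> powE V1 F1 i \<and> w2 + u2 \<in> powE V2 F2 j"
      by (intro exI[of _ n] exI[of _ 0]) simp
  qed
  have "cc V1 (powE V1 F1 (Suc k)) A1 u1"
    unfolding cc_def
  proof (intro conjI ballI u1)
    fix w1 assume w1: "w1 \<in> vexp V1"
    show "w1 + u1 \<in> powE V1 F1 (Suc k) \<longleftrightarrow> w1 \<in> meets A1"
      using cndD[OF c w1 vexp_zero] red[OF vexp_zero, of "Suc k" w1 u1] nm by simp
  qed
  then obtain u' where u': "cc V1 (powE V1 F1 k) A1 u'" using H1 k by blast
  have "cnd V1 (powE V1 F1) A1 u' V2 (powE V2 F2) {} u2 k"
    unfolding cnd_def
  proof (intro ballI)
    fix w1 w2 assume w1: "w1 \<in> vexp V1" and w2: "w2 \<in> vexp V2"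
    show "(\<exists>i j. i + j = k \<and> w1 + u' \<in> powE V1 F1 i \<and> w2 + u2 \<in> powE V2 F2 j) \<longleftrightarrow> (w1 \<in> meets A1 \<or> w2 \<in> meets {})"
      using red[OF w2, of k w1 u'] u' w1 nm unfolding cc_def by simp
  qed
  moreover have "u' \<in> vexp V1" using u' unfolding cc_def by blast
  ultimately show ?thesis by blast
qed

lemma exists_level:
  assumes F: "upc V F" and u: "u \<in> vexp V" and N: "u \<notin> powE V F N"
  shows "\<exists>p. \<forall>i. u \<in> powE V F i \<longleftrightarrow> i \<le> p"
proof -
  define m where "m = (LEAST i. u \<notin> powE V F i)"
  have m1: "u \<notin> powE V F m" unfolding m_def using N by (rule LeastI)
  have m2: "i < m \<Longrightarrow> u \<in> powE V F i" for i unfolding m_def using not_less_Least by blast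
  have "m \<noteq> 0" using m1 u by (metis powE.simps(1))
  show ?thesis
  proof (intro exI[of _ "m - 1"] allI iffI)
    fix i assume "u \<in> powE V F i"
    then have "\<not> m \<le> i" using powE_anti[OF F, of m i] m1 by blast
    then show "i \<le> m - 1" by simp
  next
    fix i assume "i \<le> m - 1"
    then show "u \<in> powE V F i" using m2 \<open>m \<noteq> 0\<close> by simp
  qed
qed

lemma L3:
  assumes F1: "upc V1 F1" and F2: "upc V2 F2"
    and c: "cnd V1 (powE V1 F1) A1 u1 V2 (powE V2 F2) A2 u2 (Suc k)"
    and A1: "A1 \<noteq> {}" "A1 \<subseteq> V1"
    and H1: "\<forall>p\<ge>1. \<forall>u. cc V1 (powE V1 F1 (Suc p)) A1 u \<longrightarrow> (\<exists>u'. cc V1 (powE V1 F1 p) A1 u')"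
    and u1: "u1 \<in> vexp V1" and u2: "u2 \<in> vexp V2"
    and p1: "\<forall>i. u1 \<in> powE V1 F1 i \<longleftrightarrow> i \<le> p" and q2: "\<forall>j. u2 \<in> powE V2 F2 j \<longleftrightarrow> j \<le> q"
    and pq: "p + q = k" and p: "1 \<le> p"
  shows "\<exists>u1'. u1' \<in> vexp V1 \<and> cnd V1 (powE V1 F1) A1 u1' V2 (powE V2 F2) A2 u2 k"
proof -
  have nm: "(0::nat \<Rightarrow>\<^sub>0 nat) \<notin> meets A" for A by simp
  have C1: "cc V1 (powE V1 F1 (Suc p)) A1 u1"
    unfolding cc_def
  proof (intro conjI ballI u1 iffI)
    fix w1 assume w1: "w1 \<in> vexp V1" and m: "w1 \<in> meets A1"
    then obtain i j where ij: "i + j = Suc k" "w1 + u1 \<in> powE V1 F1 i" "0 + u2 \<in> powE V2 F2 j"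
      using cndD[OF c w1 vexp_zero] by blast
    then have "j \<le> q" using q2 by simp
    then have "Suc p \<le> i" using ij(1) pq by simp
    then show "w1 + u1 \<in> powE V1 F1 (Suc p)" using powE_anti[OF F1] ij(2) by blast
  next
    fix w1 assume w1: "w1 \<in> vexp V1" and h: "w1 + u1 \<in> powE V1 F1 (Suc p)"
    have "0 + u2 \<in> powE V2 F2 q" using q2 by simp
    then have "\<exists>i j. i + j = Suc k \<and> w1 + u1 \<in> powE V1 F1 i \<and> 0 + u2 \<in> powE V2 F2 j"
      using h pq by (intro exI[of _ "Suc p"] exI[of _ q]) simp
    then show "w1 \<in> meets A1" using cndD[OF c w1 vexp_zero] by simp
  qed
  obtain u' where u': "cc V1 (powE V1 F1 p) A1 u'" using H1 p C1 by blast
  have u'V: "u' \<in> vexp V1" using u' unfolding cc_def by blast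
  obtain a where a: "a \<in> A1" using A1 by blast
  have aV: "Poly_Mapping.single a 1 \<in> vexp V1" using a A1 single_vexp by blast
  have "Poly_Mapping.single a 1 + u' \<in> powE V1 F1 (Suc (p - 1))"
    using u' aV single_meets[OF a] p unfolding cc_def by simp
  then have u'p: "u' \<in> powE V1 F1 (p - 1)" using powE_drop[OF F1 u'V] by blast
  have Q2: "w2 + u2 \<in> powE V2 F2 (Suc q)" if w2: "w2 \<in> vexp V2" "w2 \<in> meets A2" for w2
  proof -
    obtain i j where ij: "i + j = Suc k" "0 + u1 \<in> powE V1 F1 i" "w2 + u2 \<in> powE V2 F2 j"
      using cndD[OF c vexp_zero w2(1)] w2(2) by blast
    then have "i \<le> p" using p1 by simp
    then have "Suc q \<le> j" using ij(1) pq by simp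
    then show ?thesis using powE_anti[OF F2] ij(3) by blast
  qed
  have Q2': "w2 \<in> meets A2" if w2: "w2 \<in> vexp V2" "w2 + u2 \<in> powE V2 F2 (Suc q)" for w2
  proof -
    have "0 + u1 \<in> powE V1 F1 p" using p1 by simp
    then have "\<exists>i j. i + j = Suc k \<and> 0 + u1 \<in> powE V1 F1 i \<and> w2 + u2 \<in> powE V2 F2 j"
      using w2(2) pq by (intro exI[of _ p] exI[of _ "Suc q"]) simp
    then show ?thesis using cndD[OF c vexp_zero w2(1)] by simp
  qed
  have "cnd V1 (powE V1 F1) A1 u' V2 (powE V2 F2) A2 u2 k"
    unfolding cnd_def
  proof (intro ballI iffI)
    fix w1 w2 assume w1: "w1 \<in> vexp V1" and w2: "w2 \<in> vexp V2"
      and "\<exists>i j. i + j = k \<and> w1 + u' \<in> powE V1 F1 i \<and> w2 + u2 \<in> powE V2 F2 j"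
    then obtain i j where ij: "i + j = k" "w1 + u' \<in> powE V1 F1 i" "w2 + u2 \<in> powE V2 F2 j" by blast
    show "w1 \<in> meets A1 \<or> w2 \<in> meets A2"
    proof (cases "w1 \<in> meets A1")
      case False
      then have "w1 + u' \<notin> powE V1 F1 p" using u' w1 unfolding cc_def by blast
      then have "\<not> p \<le> i" using powE_anti[OF F1, of p i] ij(2) by blast
      then have "Suc q \<le> j" using ij(1) pq by simp
      then have "w2 + u2 \<in> powE V2 F2 (Suc q)" using powE_anti[OF F2] ij(3) by blast
      then show ?thesis using Q2' w2 by blast
    qed simp
  next
    fix w1 w2 assume w1: "w1 \<in> vexp V1" and w2: "w2 \<in> vexp V2"
      and m: "w1 \<in> meets A1 \<or> w2 \<in> meets A2"
    show "\<exists>i j. i + j = k \<and> w1 + u' \<in> powE V1 F1 i \<and> w2 + u2 \<in> powE V2 F2 j"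
    proof (cases "w1 \<in> meets A1")
      case True
      then have "w1 + u' \<in> powE V1 F1 p" using u' w1 unfolding cc_def by blast
      moreover have "w2 + u2 \<in> powE V2 F2 q" using q2 powE_up[OF F2 _ w2, of u2 q] by (simp add: add.commute)
      ultimately show ?thesis using pq by blast
    next
      case False
      then have "w2 \<in> meets A2" using m by blast
      then have "w2 + u2 \<in> powE V2 F2 (Suc q)" using Q2 w2 by blast
      moreover have "w1 + u' \<in> powE V1 F1 (p - 1)" using powE_up[OF F1 u'p w1] by (simp add: add.commute)
      moreover have "(p - 1) + Suc q = k" using pq p by simp
      ultimately show ?thesis by blast
    qed
  qed
  then show ?thesis using u'V by blast
qed

lemma comb:
  assumes F1: "upc V1 F1" and F2: "upc V2 F2"
    and c: "cnd V1 (powE V1 F1) A1 u1 V2 (powE V2 F2) A2 u2 (Suc k)" and k: "1 \<le> k"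
    and A1: "A1 \<subseteq> V1" and A2: "A2 \<subseteq> V2"
    and H1: "\<forall>p\<ge>1. \<forall>u. cc V1 (powE V1 F1 (Suc p)) A1 u \<longrightarrow> (\<exists>u'. cc V1 (powE V1 F1 p) A1 u')"
    and H2: "\<forall>p\<ge>1. \<forall>u. cc V2 (powE V2 F2 (Suc p)) A2 u \<longrightarrow> (\<exists>u'. cc V2 (powE V2 F2 p) A2 u')"
    and u1: "u1 \<in> vexp V1" and u2: "u2 \<in> vexp V2"
  shows "\<exists>u1' u2'. u1' \<in> vexp V1 \<and> u2' \<in> vexp V2 \<and> cnd V1 (powE V1 F1) A1 u1' V2 (powE V2 F2) A2 u2' k"
proof (cases "A1 = {}")
  case True
  note A1e = True
  show ?thesis
  proof (cases "A2 = {}")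
    case True
    then show ?thesis using L0[OF F1 F2 _ k] c A1e u1 u2 by blast
  next
    case False
    have c': "cnd V2 (powE V2 F2) A2 u2 V1 (powE V1 F1) {} u1 (Suc k)" using c A1e cnd_swap by metis
    obtain u2' where "u2' \<in> vexp V2" "cnd V2 (powE V2 F2) A2 u2' V1 (powE V1 F1) {} u1 k"
      using L1[OF F2 F1 c' k H2 u2 u1] by blast
    then show ?thesis using u1 A1e cnd_swap by metis
  qed
next
  case False
  note A1ne = False
  show ?thesis
  proof (cases "A2 = {}")
    case True
    then show ?thesis using L1[OF F1 F2 _ k H1 u1 u2] c u2 by blast
  next
    case False
    note A2ne = False
    have nm: "(0::nat \<Rightarrow>\<^sub>0 nat) \<notin> meets A" for A by simp
    have notboth: "\<not> (u1 \<in> powE V1 F1 i \<and> u2 \<in> powE V2 F2 j)" if "i + j = Suc k" for i j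
    proof
      assume "u1 \<in> powE V1 F1 i \<and> u2 \<in> powE V2 F2 j"
      then have "\<exists>i j. i + j = Suc k \<and> 0 + u1 \<in> powE V1 F1 i \<and> 0 + u2 \<in> powE V2 F2 j" using that by auto
      then show False using cndD[OF c vexp_zero vexp_zero] by simp
    qed
    have "u1 \<notin> powE V1 F1 (Suc k)" using notboth[of "Suc k" 0] u2 by simp
    then obtain p where p1: "\<forall>i. u1 \<in> powE V1 F1 i \<longleftrightarrow> i \<le> p" using exists_level[OF F1 u1] by blast
    have "u2 \<notin> powE V2 F2 (Suc k)" using notboth[of 0 "Suc k"] u1 by simp
    then obtain q where q2: "\<forall>j. u2 \<in> powE V2 F2 j \<longleftrightarrow> j \<le> q" using exists_level[OF F2 u2] by blast
    have le: "p + q \<le> k"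
    proof (rule ccontr)
      assume a: "\<not> p + q \<le> k"
      show False
      proof (cases "q \<le> k")
        case False
        have "u1 \<in> powE V1 F1 0" using p1 by blast
        moreover have "u2 \<in> powE V2 F2 (Suc k)" using q2 False by (simp only: not_le Suc_le_eq)
        ultimately show False using notboth[of 0 "Suc k"] by simp
      next
        case True
        then have "u1 \<in> powE V1 F1 (Suc k - q)" "u2 \<in> powE V2 F2 q" "(Suc k - q) + q = Suc k"
        using p1 q2 a by auto
      then show False using notboth by blast
    qed
    qed
    have ge: "k \<le> p + q"
    proof -
      obtain b where b: "b \<in> A2" using A2ne by blast
      have bV: "Poly_Mapping.single b 1 \<in> vexp V2" using b A2 single_vexp by blast
      obtain i j where ij: "i + j = Suc k" "0 + u1 \<in> powE V1 F1 i" "Poly_Mapping.single b 1 + u2 \<in> powE V2 F2 j"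
        using cndD[OF c vexp_zero bV] single_meets[OF b] by blast
      have "i \<le> p" using ij(2) p1 by simp
      then obtain j' where j': "j = Suc j'" using ij(1) le by (cases j) auto
      then have "u2 \<in> powE V2 F2 j'" using powE_drop[OF F2 u2] ij(3) by blast
      then have "j' \<le> q" using q2 by blast
      then show ?thesis using ij(1) j' \<open>i \<le> p\<close> by simp
    qed
    have pq: "p + q = k" using le ge by simp
    show ?thesis
    proof (cases "1 \<le> p")
      case True
      then show ?thesis using L3[OF F1 F2 c A1ne A1 H1 u1 u2 p1 q2 pq] u2 by blast
    next
      case False
      then have q: "1 \<le> q" using pq k by simp
      have c': "cnd V2 (powE V2 F2) A2 u2 V1 (powE V1 F1) A1 u1 (Suc k)" using c cnd_swap by metis
      have qp: "q + p = k" using pq by simp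
      obtain u2' where "u2' \<in> vexp V2" "cnd V2 (powE V2 F2) A2 u2' V1 (powE V1 F1) A1 u1 k"
        using L3[OF F2 F1 c' A2ne A2 H2 u2 u1 q2 p1 qp q] by blast
      then show ?thesis using u1 cnd_swap by metis
    qed
  qed
qed

lemma lookup_mult_max:
  fixes a g :: "'k::comm_ring_1 mpoly"
  assumes ha: "\<forall>x\<in>Poly_Mapping.keys a. x \<le> s" and hg: "\<forall>y\<in>Poly_Mapping.keys g. y \<le> t"
  shows "Poly_Mapping.lookup (a * g) (s + t) = Poly_Mapping.lookup a s * Poly_Mapping.lookup g t"
proof -
  define a' where "a' = a - Poly_Mapping.single s (Poly_Mapping.lookup a s)"
  define g' where "g' = g - Poly_Mapping.single t (Poly_Mapping.lookup g t)"
  have ka': "\<forall>x\<in>Poly_Mapping.keys a'. x < s"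
  proof
    fix x assume x: "x \<in> Poly_Mapping.keys a'"
    have "x \<noteq> s" using x by (auto simp: a'_def in_keys_iff lookup_minus)
    moreover have "x \<in> Poly_Mapping.keys a" using x
      by (auto simp: a'_def in_keys_iff lookup_minus lookup_single when_def split: if_splits)
    ultimately show "x < s" using ha by force
  qed
  have kg': "\<forall>y\<in>Poly_Mapping.keys g'. y < t"
  proof
    fix y assume y: "y \<in> Poly_Mapping.keys g'"
    have "y \<noteq> t" using y by (auto simp: g'_def in_keys_iff lookup_minus)
    moreover have "y \<in> Poly_Mapping.keys g" using y
      by (auto simp: g'_def in_keys_iff lookup_minus lookup_single when_def split: if_splits)
    ultimately show "y < t" using hg by force
  qed
  have z: "Poly_Mapping.lookup (p * q) (s + t) = 0"
    if "\<forall>x\<in>Poly_Mapping.keys p. \<forall>y\<in>Poly_Mapping.keys q. x + y \<noteq> s + t" for p q :: "'k mpoly"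
  proof -
    have "s + t \<notin> Poly_Mapping.keys (p * q)"
    proof
      assume "s + t \<in> Poly_Mapping.keys (p * q)"
      then have "s + t \<in> {a + b |a b. a \<in> Poly_Mapping.keys p \<and> b \<in> Poly_Mapping.keys q}"
        using keys_mult[of p q] by (rule subsetD[rotated])
      then obtain x y where "s + t = x + y" "x \<in> Poly_Mapping.keys p" "y \<in> Poly_Mapping.keys q" by blast
      then show False using that by metis
    qed
    then show ?thesis by (simp add: in_keys_iff)
  qed
  have z1: "Poly_Mapping.lookup (Poly_Mapping.single s c * g') (s + t) = 0" for c
    by (rule z) (use kg' in \<open>auto dest!: add_strict_left_mono[of _ t s]\<close>)
  have z2: "Poly_Mapping.lookup (a' * Poly_Mapping.single t c) (s + t) = 0" for c
    by (rule z) (use ka' in \<open>auto dest!: add_strict_right_mono[of _ s t]\<close>)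
  have z3: "Poly_Mapping.lookup (a' * g') (s + t) = 0"
    by (rule z) (use ka' kg' in \<open>fastforce dest: add_strict_mono\<close>)
  have "a * g = Poly_Mapping.single s (Poly_Mapping.lookup a s) * Poly_Mapping.single t (Poly_Mapping.lookup g t)
      + Poly_Mapping.single s (Poly_Mapping.lookup a s) * g' + a' * Poly_Mapping.single t (Poly_Mapping.lookup g t) + a' * g'"
    unfolding a'_def g'_def by (simp add: algebra_simps)
  then show ?thesis using z1 z2 z3 by (simp add: lookup_add mult_single)
qed

lemma polys_power: "x \<in> polys V \<Longrightarrow> x ^ n \<in> polys V"
  by (induction n) (simp_all add: polys_mult)

lemma neg_one_single: "(- 1 :: 'k::comm_ring_1 mpoly) = Poly_Mapping.single 0 (- 1)"
  by (simp add: single_uminus)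

lemma ideal_uminusI: assumes "is_ideal (polys V) J" "b \<in> J" shows "- (b :: 'k::comm_ring_1 mpoly) \<in> J"
proof -
  have "(-1 :: 'k mpoly) \<in> polys V" by (simp only: neg_one_single const_polys)
  then have "(-1) * b \<in> J" using assms ideal_multI by blast
  then show ?thesis by simp
qed

lemma ideal_diffI: "is_ideal (polys V) J \<Longrightarrow> a \<in> J \<Longrightarrow> b \<in> J \<Longrightarrow> a - (b :: 'k::comm_ring_1 mpoly) \<in> J"
  using ideal_addI[of "polys V" J a "- b"] ideal_uminusI[of V J b] by simp

lemma ideal_sub: "is_ideal S J \<Longrightarrow> J \<subseteq> S"
  by (simp add: is_ideal_def)

lemma prime_one:
  assumes "prime_ideal S P" "1 \<in> S" shows "1 \<notin> P"
proof
  assume "1 \<in> P"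
  then have "\<forall>s\<in>S. s * 1 \<in> P" using assms(1) unfolding prime_ideal_def is_ideal_def by blast
  then have "S \<subseteq> P" by auto
  moreover have "P \<subseteq> S" using assms(1) unfolding prime_ideal_def is_ideal_def by blast
  ultimately show False using assms(1) unfolding prime_ideal_def by blast
qed

lemma prime_pow:
  assumes P: "prime_ideal (polys V) P" and x: "x \<in> polys V" and h: "x ^ N \<in> P"
  shows "x \<in> P"
  using h
proof (induction N)
  case 0 then show ?case using prime_one[OF P] by simp
next
  case (Suc N)
  have "x * x ^ N \<in> P" using Suc.prems by simp
  then have "x \<in> P \<or> x ^ N \<in> P" using P x polys_power[OF x, of N] unfolding prime_ideal_def by blast
  then show ?case using Suc.IH by blast
qed

definition rem :: "(nat \<Rightarrow>\<^sub>0 nat) set \<Rightarrow> 'k::comm_ring_1 mpoly \<Rightarrow> 'k mpoly" where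
  "rem X p = Poly_Mapping.mapp (\<lambda>t c. if t \<in> X then 0 else c) p"

lemma lookup_rem: "Poly_Mapping.lookup (rem X p) t = (if t \<in> X then 0 else Poly_Mapping.lookup p t)"
  by (auto simp: rem_def lookup_mapp when_def in_keys_iff)

lemma keys_rem: "Poly_Mapping.keys (rem X p) = Poly_Mapping.keys p - X"
  by (auto simp: in_keys_iff lookup_rem split: if_splits)

lemma rem_diff_mideal: "p - rem X p \<in> mideal X"
  unfolding mideal_def by (auto simp: in_keys_iff lookup_minus lookup_rem split: if_splits)

lemma mideal_mult_any:
  assumes "\<forall>t\<in>F. \<forall>r. t + r \<in> F" "q \<in> mideal F"
  shows "p * q \<in> mideal F"
proof -
  have "Poly_Mapping.keys (p * q) \<subseteq> {a + b | a b. a \<in> Poly_Mapping.keys p \<and> b \<in> Poly_Mapping.keys q}"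
    by (rule keys_mult)
  also have "\<dots> \<subseteq> F"
  proof clarify
    fix a b assume "a \<in> Poly_Mapping.keys p" "b \<in> Poly_Mapping.keys q"
    then have "b \<in> F" using assms by (auto simp: mideal_def)
    then show "a + b \<in> F" using assms(1) by (metis add.commute)
  qed
  finally show ?thesis by (simp add: mideal_def)
qed

lemma meets_up: "\<forall>t\<in>meets A. \<forall>r. t + r \<in> meets A"
  using meets_add by blast

lemma upc_PA: "upc V (vexp V \<inter> meets A)"
  unfolding upc_def using vexp_add meets_add by blast

lemma PA_eq: "mideal (vexp V \<inter> meets A) = polys V \<inter> mideal (meets A)"
  by (auto simp: mideal_def polys_mideal)

lemma prime_PA:
  "prime_ideal (polys V) (mideal (vexp V \<inter> meets A) :: 'k::field mpoly set)"
  unfolding prime_ideal_def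
proof (intro conjI ballI impI)
  show "is_ideal (polys V) (mideal (vexp V \<inter> meets A) :: 'k mpoly set)" by (rule is_ideal_mideal[OF upc_PA])
  show "mideal (vexp V \<inter> meets A) \<noteq> (polys V :: 'k mpoly set)"
  proof
    assume "mideal (vexp V \<inter> meets A) = (polys V :: 'k mpoly set)"
    then have "(1 :: 'k mpoly) \<in> mideal (vexp V \<inter> meets A)" using one_polys by metis
    then show False by (simp add: mideal_def)
  qed
  fix a b :: "'k mpoly" assume a: "a \<in> polys V" and b: "b \<in> polys V" and ab: "a * b \<in> mideal (vexp V \<inter> meets A)"
  let ?Q = "mideal (meets A) :: 'k mpoly set"
  define a0 where "a0 = rem (meets A) a"
  define b0 where "b0 = rem (meets A) b"
  have a1: "a - a0 \<in> ?Q" and b1: "b - b0 \<in> ?Q" unfolding a0_def b0_def by (rule rem_diff_mideal)+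
  have "a * b = a0 * b0 + (a0 * (b - b0) + (a - a0) * b)" by (simp add: algebra_simps)
  moreover have "a0 * (b - b0) + (a - a0) * b \<in> ?Q"
    using mideal_mult_any[OF meets_up b1] mideal_mult_any[OF meets_up a1, of b]
    by (intro mideal_add) (simp_all add: mult.commute)
  moreover have "a * b \<in> ?Q" using ab PA_eq by blast
  ultimately have "a0 * b0 \<in> ?Q" using mideal_diff by (metis add_diff_cancel_right')
  moreover have "Poly_Mapping.keys (a0 * b0) \<inter> meets A = {}"
  proof -
    have "Poly_Mapping.keys (a0 * b0) \<subseteq> {x + y | x y. x \<in> Poly_Mapping.keys a0 \<and> y \<in> Poly_Mapping.keys b0}"
      by (rule keys_mult)
    moreover have "{x + y | x y. x \<in> Poly_Mapping.keys a0 \<and> y \<in> Poly_Mapping.keys b0} \<inter> meets A = {}"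
      unfolding a0_def b0_def keys_rem using meets_add by blast
    ultimately show ?thesis by blast
  qed
  ultimately have "Poly_Mapping.keys (a0 * b0) = {}" unfolding mideal_def by blast
  then have "a0 * b0 = 0" by simp
  then have "a0 = 0 \<or> b0 = 0" by simp
  then have "a \<in> ?Q \<or> b \<in> ?Q" using a1 b1 by auto
  then show "a \<in> mideal (vexp V \<inter> meets A) \<or> b \<in> mideal (vexp V \<inter> meets A)"
    using a b PA_eq by blast
qed

lemma AssI:
  assumes F: "upc V F" and c: "cc V F A u"
  shows "mideal (vexp V \<inter> meets A) \<in> Ass (polys V) (mideal F :: 'k::field mpoly set)"
  unfolding Ass_def
proof (intro CollectI conjI bexI)
  show "prime_ideal (polys V) (mideal (vexp V \<inter> meets A) :: 'k mpoly set)" by (rule prime_PA)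
  have uV: "u \<in> vexp V" using c unfolding cc_def by blast
  show "monom u \<in> (polys V :: 'k mpoly set)" by (rule monom_polys[OF uV])
  show "mideal (vexp V \<inter> meets A) = {a \<in> polys V. a * monom u \<in> (mideal F :: 'k mpoly set)}"
  proof (intro set_eqI iffI)
    fix a :: "'k mpoly" assume a: "a \<in> mideal (vexp V \<inter> meets A)"
    then have aS: "a \<in> polys V" using PA_eq by blast
    have "Poly_Mapping.keys (a * monom u) = (\<lambda>t. u + t) ` Poly_Mapping.keys a"
      unfolding mult.commute[of a "monom u"] by (rule keys_monom_mult)
    also have "\<dots> \<subseteq> F"
    proof clarify
      fix t assume "t \<in> Poly_Mapping.keys a"
      then have "t \<in> vexp V" "t \<in> meets A" using a unfolding mideal_def by blast+
      then show "u + t \<in> F" using c unfolding cc_def by (simp add: add.commute)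
    qed
    finally show "a \<in> {a \<in> polys V. a * monom u \<in> mideal F}" using aS by (simp add: mideal_def)
  next
    fix a :: "'k mpoly" assume "a \<in> {a \<in> polys V. a * monom u \<in> mideal F}"
    then have aS: "a \<in> polys V" and h: "a * monom u \<in> mideal F" by blast+
    have k: "Poly_Mapping.keys (a * monom u) = (\<lambda>t. u + t) ` Poly_Mapping.keys a"
      unfolding mult.commute[of a "monom u"] by (rule keys_monom_mult)
    have "Poly_Mapping.keys a \<subseteq> vexp V \<inter> meets A"
    proof
      fix t assume t: "t \<in> Poly_Mapping.keys a"
      then have tV: "t \<in> vexp V" using aS unfolding polys_mideal mideal_def by blast
      have "u + t \<in> F" using h t k unfolding mideal_def by blast
      then have "t \<in> meets A" using c tV unfolding cc_def by (simp add: add.commute)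
      then show "t \<in> vexp V \<inter> meets A" using tV by blast
    qed
    then show "a \<in> mideal (vexp V \<inter> meets A)" by (simp add: mideal_def)
  qed
qed

lemma claim_pow:
  fixes a :: "'k::field mpoly"
  assumes F: "upc V F" and aS: "a \<in> polys V" and a0: "a \<noteq> 0" and s: "s = Max (Poly_Mapping.keys a)"
  shows "g \<in> polys V \<Longrightarrow> a * g \<in> mideal F \<Longrightarrow> \<exists>N. monom s ^ N * g \<in> mideal F"
proof (induction "card (Poly_Mapping.keys g - F)" arbitrary: g rule: less_induct)
  case less
  have J: "is_ideal (polys V) (mideal F :: 'k mpoly set)" by (rule is_ideal_mideal[OF F])
  define g' where "g' = rem F g"
  have kg': "Poly_Mapping.keys g' = Poly_Mapping.keys g - F" unfolding g'_def by (rule keys_rem)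
  have gg': "g - g' \<in> mideal F" unfolding g'_def by (rule rem_diff_mideal)
  have sk: "s \<in> Poly_Mapping.keys a" using a0 s by simp
  have sV: "s \<in> vexp V" using sk aS unfolding polys_mideal mideal_def by blast
  have msS: "monom s \<in> polys V" by (rule monom_polys[OF sV])
  have g'S: "g' \<in> polys V" using less.prems(1) kg' unfolding polys_def by blast
  show ?case
  proof (cases "g' = 0")
    case True
    then have "monom s ^ 0 * g \<in> mideal F" using gg' by simp
    then show ?thesis by blast
  next
    case False
    define t where "t = Max (Poly_Mapping.keys g')"
    have tk: "t \<in> Poly_Mapping.keys g'" using False t_def by simp
    have "a * (g - g') \<in> mideal F" using ideal_multI[OF J aS gg'] .
    then have "a * g - a * (g - g') \<in> mideal F" using mideal_diff[OF less.prems(2)] by blast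
    then have ag': "a * g' \<in> mideal F" by (simp add: algebra_simps)
    have "Poly_Mapping.lookup (a * g') (s + t) = Poly_Mapping.lookup a s * Poly_Mapping.lookup g' t"
      by (rule lookup_mult_max) (simp_all add: s t_def)
    also have "\<dots> \<noteq> 0" using sk tk by (simp add: in_keys_iff)
    finally have "s + t \<in> Poly_Mapping.keys (a * g')" by (simp add: in_keys_iff)
    then have stF: "s + t \<in> F" using ag' unfolding mideal_def by blast
    define h where "h = monom s * g'"
    have hS: "h \<in> polys V" unfolding h_def by (rule polys_mult[OF msS g'S])
    have ah: "a * h \<in> mideal F" using ideal_multI[OF J msS ag'] unfolding h_def by (simp add: ac_simps)
    have kh: "Poly_Mapping.keys h = (\<lambda>x. s + x) ` Poly_Mapping.keys g'" unfolding h_def by (rule keys_monom_mult)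
    have "Poly_Mapping.keys h - F \<subseteq> (\<lambda>x. s + x) ` (Poly_Mapping.keys g' - {t})" using kh stF by blast
    then have "card (Poly_Mapping.keys h - F) \<le> card ((\<lambda>x. s + x) ` (Poly_Mapping.keys g' - {t}))"
      by (rule card_mono[rotated]) simp
    also have "\<dots> \<le> card (Poly_Mapping.keys g' - {t})" by (rule card_image_le) simp
    also have "\<dots> < card (Poly_Mapping.keys g')" using tk by (rule card_Diff1_less[OF finite_keys])
    finally have "card (Poly_Mapping.keys h - F) < card (Poly_Mapping.keys g - F)" using kg' by simp
    then obtain N where N: "monom s ^ N * h \<in> mideal F" using less.hyps[OF _ hS ah] by blast
    have "monom s ^ Suc N * g = monom s ^ N * h + monom s ^ Suc N * (g - g')"
      unfolding h_def by (simp add: algebra_simps)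
    moreover have "monom s ^ Suc N * (g - g') \<in> mideal F" using ideal_multI[OF J polys_power[OF msS] gg'] .
    ultimately have "monom s ^ Suc N * g \<in> mideal F" using N mideal_add by metis
    then show ?thesis by blast
  qed
qed

lemma vexp_sum: "finite X \<Longrightarrow> (\<forall>x\<in>X. W x \<in> vexp V) \<Longrightarrow> sum W X \<in> vexp V"
  by (induction X rule: finite_induct) (simp_all add: vexp_add)

lemma keys_minus_single_mon:
  "Poly_Mapping.keys (a - Poly_Mapping.single s (Poly_Mapping.lookup a s)) = Poly_Mapping.keys a - {s}"
  by (auto simp: in_keys_iff lookup_minus lookup_single when_def split: if_splits)

lemma AssE:
  fixes P :: "'k::field mpoly set"
  assumes F: "upc V F" and fin: "finite V" and PA: "P \<in> Ass (polys V) (mideal F)"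
  shows "\<exists>A u. A \<subseteq> V \<and> P = mideal (vexp V \<inter> meets A) \<and> cc V F A u"
proof -
  from PA obtain f where Pp: "prime_ideal (polys V) P" and fS: "f \<in> polys V"
    and Pf: "P = {a \<in> polys V. a * f \<in> mideal F}"
    unfolding Ass_def by blast
  have isP: "is_ideal (polys V) P" using Pp unfolding prime_ideal_def by blast
  have J: "is_ideal (polys V) (mideal F :: 'k mpoly set)" by (rule is_ideal_mideal[OF F])
  have one: "(1 :: 'k mpoly) \<notin> P" using prime_one[OF Pp one_polys] .
  have memP: "a \<in> P \<longleftrightarrow> a \<in> polys V \<and> a * f \<in> mideal F" for a using Pf by blast
  have H: "\<forall>a\<in>P. card (Poly_Mapping.keys a) = n \<longrightarrow> (\<forall>s\<in>Poly_Mapping.keys a. monom s \<in> P)" for n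
  proof (induction n rule: less_induct)
    case (less n)
    show ?case
    proof (intro ballI impI)
      fix a s' assume aP: "a \<in> P" and cn: "card (Poly_Mapping.keys a) = n" and s': "s' \<in> Poly_Mapping.keys a"
      have aS: "a \<in> polys V" and af: "a * f \<in> mideal F" using aP memP by blast+
      have a0: "a \<noteq> 0" using s' by auto
      define s where "s = Max (Poly_Mapping.keys a)"
      have sk: "s \<in> Poly_Mapping.keys a" using a0 s_def by simp
      have sV: "s \<in> vexp V" using sk aS unfolding polys_mideal mideal_def by blast
      have msS: "monom s \<in> polys V" by (rule monom_polys[OF sV])
      obtain N where "monom s ^ N * f \<in> mideal F" using claim_pow[OF F aS a0 s_def fS af] by blast
      then have "monom s ^ N \<in> P" using memP polys_power[OF msS] by blast
      then have msP: "monom s \<in> P" using prime_pow[OF Pp msS] by blast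
      show "monom s' \<in> P"
      proof (cases "s' = s")
        case True then show ?thesis using msP by simp
      next
        case False
        define a' where "a' = a - Poly_Mapping.single s (Poly_Mapping.lookup a s)"
        have "Poly_Mapping.single 0 (Poly_Mapping.lookup a s) * monom s \<in> P"
          using ideal_multI[OF isP const_polys msP] .
        then have "a' \<in> P" unfolding a'_def single_monom using ideal_diffI[OF isP aP] by blast
        moreover have ka': "Poly_Mapping.keys a' = Poly_Mapping.keys a - {s}"
          unfolding a'_def by (rule keys_minus_single_mon)
        moreover have "card (Poly_Mapping.keys a') < n" unfolding ka' cn[symmetric] using sk by (rule card_Diff1_less[OF finite_keys])
        moreover have "s' \<in> Poly_Mapping.keys a'" using ka' s' False by blast
        ultimately show ?thesis using less.IH by blast
      qed
    qed
  qed
  have homog: "a \<in> P \<Longrightarrow> s \<in> Poly_Mapping.keys a \<Longrightarrow> monom s \<in> P" for a s using H by blast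
  define A where "A = {i \<in> V. monom (Poly_Mapping.single i 1) \<in> P}"
  define deg where "deg s = sum (Poly_Mapping.lookup s) V" for s :: "nat \<Rightarrow>\<^sub>0 nat"
  have degS: "deg (Poly_Mapping.single i 1 + s) = Suc (deg s)" if "i \<in> V" for i s
  proof -
    have "deg (Poly_Mapping.single i 1 + s) = sum (\<lambda>k. Poly_Mapping.lookup (Poly_Mapping.single i 1) k) V + deg s"
      unfolding deg_def by (simp add: lookup_add sum.distrib)
    also have "sum (\<lambda>k. Poly_Mapping.lookup (Poly_Mapping.single i (1::nat)) k) V = 1"
      using that fin by (simp add: lookup_single when_def)
    finally show ?thesis by simp
  qed
  have M: "\<forall>s\<in>vexp V. deg s = n \<longrightarrow> monom s \<in> P \<longrightarrow> s \<in> meets A" for n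
  proof (induction n rule: less_induct)
    case (less n)
    show ?case
    proof (intro ballI impI)
      fix s assume sV: "s \<in> vexp V" and dn: "deg s = n" and sP: "monom s \<in> P"
      have "s \<noteq> 0" using sP one by (auto simp: monom_zero)
      then obtain i where ik: "i \<in> Poly_Mapping.keys s" by (metis ex_in_conv keys_eq_empty)
      then have iV: "i \<in> V" and si: "0 < Poly_Mapping.lookup s i" using sV unfolding vexp_def by (auto simp: in_keys_iff)
      define s' where "s' = s - Poly_Mapping.single i 1"
      have ss': "s = Poly_Mapping.single i 1 + s'" unfolding s'_def by (rule single_split[OF si])
      have s'V: "s' \<in> vexp V" unfolding s'_def by (rule vexp_minus_single[OF sV])
      have "monom (Poly_Mapping.single i 1) * monom s' \<in> P" using sP ss' by (simp add: monom_mult)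
      then have "monom (Poly_Mapping.single i 1) \<in> P \<or> monom s' \<in> P"
        using Pp monom_polys[OF single_vexp[OF iV]] monom_polys[OF s'V] unfolding prime_ideal_def by blast
      then show "s \<in> meets A"
      proof
        assume "monom (Poly_Mapping.single i 1) \<in> P"
        then have "i \<in> A" using iV A_def by blast
        then show ?thesis using si unfolding meets_def by blast
      next
        assume "monom s' \<in> P"
        moreover have "deg s' < n" using dn ss' degS[OF iV, of s'] by simp
        ultimately have "s' \<in> meets A" using less.IH s'V by blast
        then show ?thesis using ss' meets_add by metis
      qed
    qed
  qed
  have PeqA: "P = mideal (vexp V \<inter> meets A)"
  proof
    show "P \<subseteq> mideal (vexp V \<inter> meets A)"
    proof
      fix a assume aP: "a \<in> P"
      have "Poly_Mapping.keys a \<subseteq> vexp V" using aP memP unfolding polys_mideal mideal_def by blast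
      moreover have "Poly_Mapping.keys a \<subseteq> meets A" using homog[OF aP] M \<open>Poly_Mapping.keys a \<subseteq> vexp V\<close> by blast
      ultimately show "a \<in> mideal (vexp V \<inter> meets A)" unfolding mideal_def by blast
    qed
    show "mideal (vexp V \<inter> meets A) \<subseteq> P"
    proof (rule mideal_sub_ideal[OF isP], blast, rule ballI)
      fix t assume t: "t \<in> vexp V \<inter> meets A"
      then obtain i where i: "i \<in> A" "0 < Poly_Mapping.lookup t i" unfolding meets_def by blast
      define t' where "t' = t - Poly_Mapping.single i 1"
      have tt': "t = Poly_Mapping.single i 1 + t'" unfolding t'_def by (rule single_split[OF i(2)])
      have t'V: "t' \<in> vexp V" unfolding t'_def using t vexp_minus_single by blast
      have "monom (Poly_Mapping.single i 1) \<in> P" using i A_def by blast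
      then have "monom t' * monom (Poly_Mapping.single i 1) \<in> P" using ideal_multI[OF isP monom_polys[OF t'V]] by blast
      then show "monom t \<in> P" using tt' by (simp add: monom_mult add.commute)
    qed
  qed
  have fV: "Poly_Mapping.keys f \<subseteq> vexp V" using fS unfolding polys_mideal mideal_def by blast
  have star: "w \<in> meets A \<longleftrightarrow> (\<forall>t\<in>Poly_Mapping.keys f. w + t \<in> F)" if wV: "w \<in> vexp V" for w
  proof -
    have "w \<in> meets A \<longleftrightarrow> monom w \<in> P" using PeqA wV by (simp add: monom_in_mideal)
    also have "\<dots> \<longleftrightarrow> monom w * f \<in> mideal F" using memP monom_polys[OF wV] by blast
    also have "\<dots> \<longleftrightarrow> (\<forall>t\<in>Poly_Mapping.keys f. w + t \<in> F)"
    proof -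
      have "Poly_Mapping.keys (monom w * f) = (\<lambda>t. w + t) ` Poly_Mapping.keys f" by (rule keys_monom_mult)
      then show ?thesis by (simp add: mideal_def image_subset_iff)
    qed
    finally show ?thesis .
  qed
  have "\<exists>u\<in>Poly_Mapping.keys f. \<forall>w\<in>vexp V. (w + u \<in> F \<longleftrightarrow> w \<in> meets A)"
  proof (rule ccontr)
    assume "\<not> ?thesis"
    then have "\<forall>u\<in>Poly_Mapping.keys f. \<exists>w. w \<in> vexp V \<and> w + u \<in> F \<and> w \<notin> meets A"
      using star by blast
    then obtain W where W: "\<forall>u\<in>Poly_Mapping.keys f. W u \<in> vexp V \<and> W u + u \<in> F \<and> W u \<notin> meets A"
      by metis
    define Ws where "Ws = sum W (Poly_Mapping.keys f)"
    have WsV: "Ws \<in> vexp V" unfolding Ws_def using W by (intro vexp_sum) auto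
    have "Ws \<notin> meets A"
    proof
      assume "Ws \<in> meets A"
      then obtain i where i: "i \<in> A" "0 < Poly_Mapping.lookup Ws i" unfolding meets_def by blast
      have "\<forall>u\<in>Poly_Mapping.keys f. Poly_Mapping.lookup (W u) i = 0" using W i(1) unfolding meets_def by auto
      then have "Poly_Mapping.lookup Ws i = 0" unfolding Ws_def lookup_sum by simp
      then show False using i(2) by simp
    qed
    moreover have "\<forall>t\<in>Poly_Mapping.keys f. Ws + t \<in> F"
    proof
      fix t assume t: "t \<in> Poly_Mapping.keys f"
      have "Ws = W t + sum W (Poly_Mapping.keys f - {t})" unfolding Ws_def using t by (simp add: sum.remove)
      then have "Ws + t = (W t + t) + sum W (Poly_Mapping.keys f - {t})" by (simp add: ac_simps)
      moreover have "sum W (Poly_Mapping.keys f - {t}) \<in> vexp V" using W by (intro vexp_sum) auto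
      moreover have "W t + t \<in> F" using W t by blast
      ultimately show "Ws + t \<in> F" using F unfolding upc_def by metis
    qed
    ultimately show False using star[OF WsV] by blast
  qed
  then obtain u where uk: "u \<in> Poly_Mapping.keys f" and uh: "\<forall>w\<in>vexp V. (w + u \<in> F \<longleftrightarrow> w \<in> meets A)" by blast
  have "cc V F A u" unfolding cc_def using uk fV uh by blast
  moreover have "A \<subseteq> V" unfolding A_def by blast
  ultimately show ?thesis using PeqA by blast
qed

lemma PA_inj:
  assumes A: "A \<subseteq> V" and B: "B \<subseteq> V"
    and eq: "mideal (vexp V \<inter> meets A) = (mideal (vexp V \<inter> meets B) :: 'k::comm_ring_1 mpoly set)"
  shows "A = B"
proof -
  have key: "(monom (Poly_Mapping.single i 1) :: 'k mpoly) \<in> mideal (vexp V \<inter> meets C) \<longleftrightarrow> i \<in> C"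
    if "i \<in> V" for i C
    using that single_vexp[OF that] by (simp add: monom_in_mideal meets_def lookup_single when_def)
  have "i \<in> A \<longleftrightarrow> i \<in> B" for i
  proof (cases "i \<in> V")
    case True
    show ?thesis using key[OF True, of A] key[OF True, of B] eq by simp
  next
    case False
    then show ?thesis using A B by blast
  qed
  then show ?thesis by blast
qed

lemma Hderive:
  assumes F: "upc V F" and fin: "finite V"
    and cp: "copersistent (polys V) (mideal F :: 'k::field mpoly set)" and A: "A \<subseteq> V"
  shows "\<forall>p\<ge>1. \<forall>u. cc V (powE V F (Suc p)) A u \<longrightarrow> (\<exists>u'. cc V (powE V F p) A u')"
proof (intro allI impI)
  fix p u assume p: "1 \<le> p" and c: "cc V (powE V F (Suc p)) A u"
  have e1: "ideal_pow (polys V) (mideal F :: 'k mpoly set) (Suc p) = mideal (powE V F (Suc p))"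
    by (rule ideal_pow_mideal[OF F])
  have e2: "ideal_pow (polys V) (mideal F :: 'k mpoly set) p = mideal (powE V F p)"
    by (rule ideal_pow_mideal[OF F])
  have sub: "Ass (polys V) (ideal_pow (polys V) (mideal F :: 'k mpoly set) (Suc p))
      \<subseteq> Ass (polys V) (ideal_pow (polys V) (mideal F :: 'k mpoly set) p)"
    using cp[unfolded copersistent_def, rule_format, OF p] .
  have "mideal (vexp V \<inter> meets A) \<in> Ass (polys V) (mideal (powE V F (Suc p)) :: 'k mpoly set)"
    by (rule AssI[OF upc_powE[OF F] c])
  then have "mideal (vexp V \<inter> meets A) \<in> Ass (polys V) (mideal (powE V F p) :: 'k mpoly set)"
    using sub unfolding e1 e2 by (rule subsetD[rotated])
  from AssE[OF upc_powE[OF F] fin this] obtain A' u' where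
      A': "A' \<subseteq> V" "(mideal (vexp V \<inter> meets A) :: 'k mpoly set) = mideal (vexp V \<inter> meets A')"
      "cc V (powE V F p) A' u'"
    by blast
  have "A = A'" using PA_inj[OF A A'(1) A'(2)] .
  then show "\<exists>u'. cc V (powE V F p) A u'" using A'(3) by blast
qed

lemma link:
  assumes V: "V = V1 \<union> V2" and D: "V1 \<inter> V2 = {}" and F1: "upc V1 F1" and F2: "upc V2 F2"
    and A: "A \<subseteq> V" and u1: "u1 \<in> vexp V1" and u2: "u2 \<in> vexp V2"
  shows "cc V (powE V (up V (F1 \<union> F2)) k) A (u1 + u2) \<longleftrightarrow>
     cnd V1 (powE V1 F1) (A \<inter> V1) u1 V2 (powE V2 F2) (A \<inter> V2) u2 k"
proof -
  have D': "V2 \<inter> V1 = {}" using D by blast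
  have sub1: "vexp V1 \<subseteq> vexp V" by (rule vexp_mono) (simp add: V)
  have sub2: "vexp V2 \<subseteq> vexp V" by (rule vexp_mono) (simp add: V)
  have uV: "u1 + u2 \<in> vexp V" using vexp_add[OF subsetD[OF sub1 u1] subsetD[OF sub2 u2]] .
  have r1u: "res V1 (u1 + u2) = u1" unfolding res_add using res_id[OF u1] res_zero[OF u2 D] by simp
  have r2u: "res V2 (u1 + u2) = u2" unfolding res_add using res_id[OF u2] res_zero[OF u1 D'] by simp
  have mem: "w + (u1 + u2) \<in> powE V (up V (F1 \<union> F2)) k \<longleftrightarrow>
      (\<exists>i j. i + j = k \<and> res V1 w + u1 \<in> powE V1 F1 i \<and> res V2 w + u2 \<in> powE V2 F2 j)"
    if wV: "w \<in> vexp V" for w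
  proof -
    have "w + (u1 + u2) \<in> vexp V" using vexp_add[OF wV uV] .
    moreover have "res V1 (w + (u1 + u2)) = res V1 w + u1" "res V2 (w + (u1 + u2)) = res V2 w + u2"
      using r1u r2u by (simp_all only: res_add)
    ultimately show ?thesis using powE_sum[OF V D F1 F2, of "w + (u1 + u2)" k] by simp
  qed
  have AV: "A \<subseteq> V1 \<union> V2" using A V by blast
  show ?thesis
  proof
    assume c: "cc V (powE V (up V (F1 \<union> F2)) k) A (u1 + u2)"
    show "cnd V1 (powE V1 F1) (A \<inter> V1) u1 V2 (powE V2 F2) (A \<inter> V2) u2 k"
      unfolding cnd_def
    proof (intro ballI)
      fix w1 w2 assume w1: "w1 \<in> vexp V1" and w2: "w2 \<in> vexp V2"
      define w where "w = w1 + w2"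
      have wV: "w \<in> vexp V" unfolding w_def using vexp_add[OF subsetD[OF sub1 w1] subsetD[OF sub2 w2]] .
      have r1: "res V1 w = w1" unfolding w_def res_add using res_id[OF w1] res_zero[OF w2 D] by simp
      have r2: "res V2 w = w2" unfolding w_def res_add using res_id[OF w2] res_zero[OF w1 D'] by simp
      have "w + (u1 + u2) \<in> powE V (up V (F1 \<union> F2)) k \<longleftrightarrow> w \<in> meets A" using c wV unfolding cc_def by blast
      then show "(\<exists>i j. i + j = k \<and> w1 + u1 \<in> powE V1 F1 i \<and> w2 + u2 \<in> powE V2 F2 j) \<longleftrightarrow>
          (w1 \<in> meets (A \<inter> V1) \<or> w2 \<in> meets (A \<inter> V2))"
        using mem[OF wV] meets_res[OF AV, of w] r1 r2 by simp
    qed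
  next
    assume c: "cnd V1 (powE V1 F1) (A \<inter> V1) u1 V2 (powE V2 F2) (A \<inter> V2) u2 k"
    show "cc V (powE V (up V (F1 \<union> F2)) k) A (u1 + u2)"
      unfolding cc_def
    proof (intro conjI uV ballI)
      fix w assume wV: "w \<in> vexp V"
      show "w + (u1 + u2) \<in> powE V (up V (F1 \<union> F2)) k \<longleftrightarrow> w \<in> meets A"
        using mem[OF wV] meets_res[OF AV, of w] cndD[OF c res_vexp res_vexp, of w w] by simp
    qed
  qed
qed

lemma monomial_ideal_mideal:
  assumes "monomial_ideal V (J :: 'k::comm_ring_1 mpoly set)"
  shows "\<exists>F. upc V F \<and> J = mideal F"
proof -
  obtain M where M: "M \<subseteq> {t. Poly_Mapping.keys t \<subseteq> V}" and J: "J = ideal_gen (polys V) (monom ` M)"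
    using assms unfolding monomial_ideal_def by blast
  have MV: "M \<subseteq> vexp V" using M unfolding vexp_def .
  show ?thesis using mono_gen[OF MV] upc_up[OF MV] J by metis
qed

theorem proposition3p3:
  fixes I I1 I2 :: "'k::field mpoly set" and m n :: nat
  assumes "1 \<le> m" and "m \<le> n"
    and "monomial_ideal {1..m} I1"
    and "monomial_ideal {m+1..n} I2"
    and "I = ideal_gen (polys {1..n}) (I1 \<union> I2)"
    and "copersistent (polys {1..m}) I1"
    and "copersistent (polys {m+1..n}) I2"
  shows "copersistent (polys {1..n}) I"
proof -
  define V1 where "V1 = {1..m}"
  define V2 where "V2 = {m+1..n}"
  define V where "V = {1..n}"
  have V: "V = V1 \<union> V2" unfolding V_def V1_def V2_def using assms(1,2) by auto
  have D: "V1 \<inter> V2 = {}" unfolding V1_def V2_def by auto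
  have fin: "finite V" "finite V1" "finite V2" unfolding V_def V1_def V2_def by simp_all
  obtain F1 where F1: "upc V1 F1" and I1: "I1 = mideal F1"
    using monomial_ideal_mideal[OF assms(3)] unfolding V1_def by blast
  obtain F2 where F2: "upc V2 F2" and I2: "I2 = mideal F2"
    using monomial_ideal_mideal[OF assms(4)] unfolding V2_def by blast
  define G where "G = up V (F1 \<union> F2)"
  have F12: "F1 \<union> F2 \<subseteq> vexp V"
    using F1 F2 vexp_mono[of V1 V] vexp_mono[of V2 V] V unfolding upc_def by blast
  have G: "upc V G" unfolding G_def by (rule upc_up[OF F12])
  have I: "I = mideal G" unfolding G_def assms(5) I1 I2 V_def[symmetric]
    by (rule sum_gen) (use V F1 F2 in auto)
  have cp1: "copersistent (polys V1) (mideal F1 :: 'k mpoly set)" using assms(6) I1 V1_def by simp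
  have cp2: "copersistent (polys V2) (mideal F2 :: 'k mpoly set)" using assms(7) I2 V2_def by simp
  show ?thesis
    unfolding copersistent_def V_def[symmetric]
  proof (intro allI impI subsetI)
    fix k P assume k: "1 \<le> k" and P: "P \<in> Ass (polys V) (ideal_pow (polys V) I (Suc k))"
    have "P \<in> Ass (polys V) (mideal (powE V G (Suc k)))"
      using P unfolding I ideal_pow_mideal[OF G] .
    from AssE[OF upc_powE[OF G] fin(1) this] obtain A u where
      A: "A \<subseteq> V" and PA: "P = mideal (vexp V \<inter> meets A)" and c: "cc V (powE V G (Suc k)) A u"
      by blast
    have uV: "u \<in> vexp V" using c unfolding cc_def by blast
    have us: "u = res V1 u + res V2 u" using res_split[of u V1 V2] uV V D by simp
    have "cnd V1 (powE V1 F1) (A \<inter> V1) (res V1 u) V2 (powE V2 F2) (A \<inter> V2) (res V2 u) (Suc k)"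
      using link[OF V D F1 F2 A res_vexp res_vexp, of "Suc k" u u] c us unfolding G_def by simp
    moreover have H1: "\<forall>p\<ge>1. \<forall>u. cc V1 (powE V1 F1 (Suc p)) (A \<inter> V1) u \<longrightarrow> (\<exists>u'. cc V1 (powE V1 F1 p) (A \<inter> V1) u')"
      by (rule Hderive[OF F1 fin(2) cp1]) blast
    moreover have H2: "\<forall>p\<ge>1. \<forall>u. cc V2 (powE V2 F2 (Suc p)) (A \<inter> V2) u \<longrightarrow> (\<exists>u'. cc V2 (powE V2 F2 p) (A \<inter> V2) u')"
      by (rule Hderive[OF F2 fin(3) cp2]) blast
    ultimately obtain u1' u2' where u': "u1' \<in> vexp V1" "u2' \<in> vexp V2"
        "cnd V1 (powE V1 F1) (A \<inter> V1) u1' V2 (powE V2 F2) (A \<inter> V2) u2' k"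
      using comb[OF F1 F2 _ k _ _ _ _ res_vexp res_vexp] by blast
    have "cc V (powE V G k) A (u1' + u2')"
      using link[OF V D F1 F2 A u'(1) u'(2), of k] u'(3) unfolding G_def by simp
    then have "P \<in> Ass (polys V) (mideal (powE V G k))" unfolding PA by (rule AssI[OF upc_powE[OF G]])
    then show "P \<in> Ass (polys V) (ideal_pow (polys V) I k)" unfolding I ideal_pow_mideal[OF G] .
  qed
qed

end
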